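(* Let $H$ be a complex Hilbert space and $\{\mathcal{U}(t)\}_{t\geq 0}$ a strongly continuous semigroup on $H$ with generator $\mathcal{L}$. Let $z\in D(\mathcal{L}^\dagger)$ with $z\neq0$, $\mathcal{P}:=(\cdot,z)(z,z)^{-1}z$, $\mathcal{Q}:=1-\mathcal{P}$. For $x\in H$ let $f(x,\cdot):\mathbb{R}_+\to\mathbb{C}$ be the unique continuous solution of $$f(x,t)=(\mathcal{U}(t)\mathcal{Q}x,\mathcal{Q}\mathcal{L}^\dagger z)(z,z)^{-1}-\int_0^tf(x,t-s)\,(\mathcal{U}(s)z,\mathcal{Q}\mathcal{L}^\dagger z)(z,z)^{-1}\,ds,$$ and define $u(x,t):=\mathcal{P}x+\mathcal{U}(t)\mathcal{Q}x-\int_0^tf(x,t-s)\,\mathcal{U}(s)z\,ds$. Then $\{\mathcal{G}(t):=u(\cdot,t)\}_{t\geq0}$ is a strongly continuous semigroup of bounded linear operators on $H$.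
   Context: The scalar product $(\cdot,\cdot)$ on $H$ is conjugate-linear in its second argument. The generator is $\mathcal{L}x:=\lim_{h\searrow 0}\frac1h[\mathcal{U}(h)x-x]$ on the set $D(\mathcal{L})$ where the limit exists; $\dagger$ denotes the adjoint. Integrals are Bochner integrals. *)

theory Defs
  imports "HOL-Analysis.Analysis"
begin

text \<open>A complex Hilbert space structure on a real Banach space type 'a:
  sc is the complex scalar multiplication, ip the scalar product
  (linear in the first, conjugate-linear in the second argument),
  inducing the given norm. Completeness comes from the class banach.\<close>
definition complex_hilbert :: "(complex \<Rightarrow> 'a::banach \<Rightarrow> 'a) \<Rightarrow> ('a \<Rightarrow> 'a \<Rightarrow> complex) \<Rightarrow> bool" where
  "complex_hilbert sc ip \<longleftrightarrow>
     (\<forall>x. sc 1 x = x) \<and>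
     (\<forall>a b x. sc (a * b) x = sc a (sc b x)) \<and>
     (\<forall>a b x. sc (a + b) x = sc a x + sc b x) \<and>
     (\<forall>a x y. sc a (x + y) = sc a x + sc a y) \<and>
     (\<forall>r x. sc (complex_of_real r) x = r *\<^sub>R x) \<and>
     (\<forall>x y w. ip (x + y) w = ip x w + ip y w) \<and>
     (\<forall>c x w. ip (sc c x) w = c * ip x w) \<and>
     (\<forall>x y. ip y x = cnj (ip x y)) \<and>
     (\<forall>x. ip x x = complex_of_real ((norm x)\<^sup>2))"

definition bounded_clin :: "(complex \<Rightarrow> 'a::real_normed_vector \<Rightarrow> 'a) \<Rightarrow> ('a \<Rightarrow> 'a) \<Rightarrow> bool" where
  "bounded_clin sc A \<longleftrightarrow> bounded_linear A \<and> (\<forall>c x. A (sc c x) = sc c (A x))"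

definition strongly_cont_semigroup :: "(complex \<Rightarrow> 'a::real_normed_vector \<Rightarrow> 'a) \<Rightarrow> (real \<Rightarrow> 'a \<Rightarrow> 'a) \<Rightarrow> bool" where
  "strongly_cont_semigroup sc T \<longleftrightarrow>
     (\<forall>t\<ge>0. bounded_clin sc (T t)) \<and>
     T 0 = id \<and>
     (\<forall>s t. 0 \<le> s \<longrightarrow> 0 \<le> t \<longrightarrow> T (s + t) = T s \<circ> T t) \<and>
     (\<forall>x. ((\<lambda>t. T t x) \<longlongrightarrow> x) (at_right 0))"

definition gen_dom :: "(real \<Rightarrow> 'a::real_normed_vector \<Rightarrow> 'a) \<Rightarrow> 'a set" where
  "gen_dom T = {x. \<exists>y. ((\<lambda>h. (1 / h) *\<^sub>R (T h x - x)) \<longlongrightarrow> y) (at_right 0)}"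

definition gen :: "(real \<Rightarrow> 'a::real_normed_vector \<Rightarrow> 'a) \<Rightarrow> 'a \<Rightarrow> 'a" where
  "gen T x = Lim (at_right 0) (\<lambda>h. (1 / h) *\<^sub>R (T h x - x))"

definition adj_dom :: "('a \<Rightarrow> 'a \<Rightarrow> complex) \<Rightarrow> 'a set \<Rightarrow> ('a \<Rightarrow> 'a) \<Rightarrow> 'a set" where
  "adj_dom ip D A = {z. \<exists>w. \<forall>x\<in>D. ip (A x) z = ip x w}"

definition adj :: "('a \<Rightarrow> 'a \<Rightarrow> complex) \<Rightarrow> 'a set \<Rightarrow> ('a \<Rightarrow> 'a) \<Rightarrow> 'a \<Rightarrow> 'a" where
  "adj ip D A z = (THE w. \<forall>x\<in>D. ip (A x) z = ip x w)"

end

theory Submission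
  imports Defs "HOL-Analysis.Analysis"
begin

locale hil =
  fixes sc :: "complex \<Rightarrow> 'a::banach \<Rightarrow> 'a" and ip :: "'a \<Rightarrow> 'a \<Rightarrow> complex"
  assumes hilb: "complex_hilbert sc ip"
begin

lemma H: "(\<forall>x. sc 1 x = x) \<and>
     (\<forall>a b x. sc (a * b) x = sc a (sc b x)) \<and>
     (\<forall>a b x. sc (a + b) x = sc a x + sc b x) \<and>
     (\<forall>a x y. sc a (x + y) = sc a x + sc a y) \<and>
     (\<forall>r x. sc (complex_of_real r) x = r *\<^sub>R x) \<and>
     (\<forall>x y w. ip (x + y) w = ip x w + ip y w) \<and>
     (\<forall>c x w. ip (sc c x) w = c * ip x w) \<and>
     (\<forall>x y. ip y x = cnj (ip x y)) \<and>
     (\<forall>x. ip x x = complex_of_real ((norm x)\<^sup>2))"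
  using hilb unfolding complex_hilbert_def .

lemmas sc_one = H[THEN conjunct1, rule_format]
lemmas sc_mult = H[THEN conjunct2, THEN conjunct1, rule_format]
lemmas sc_add_left = H[THEN conjunct2, THEN conjunct2, THEN conjunct1, rule_format]
lemmas sc_add_right = H[THEN conjunct2, THEN conjunct2, THEN conjunct2, THEN conjunct1, rule_format]
lemmas sc_real = H[THEN conjunct2, THEN conjunct2, THEN conjunct2, THEN conjunct2, THEN conjunct1, rule_format]
lemmas ip_add_left = H[THEN conjunct2, THEN conjunct2, THEN conjunct2, THEN conjunct2, THEN conjunct2, THEN conjunct1, rule_format]
lemmas ip_sc_left = H[THEN conjunct2, THEN conjunct2, THEN conjunct2, THEN conjunct2, THEN conjunct2, THEN conjunct2, THEN conjunct1, rule_format]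
lemmas ip_cnj = H[THEN conjunct2, THEN conjunct2, THEN conjunct2, THEN conjunct2, THEN conjunct2, THEN conjunct2, THEN conjunct2, THEN conjunct1, rule_format]
lemmas ip_self = H[THEN conjunct2, THEN conjunct2, THEN conjunct2, THEN conjunct2, THEN conjunct2, THEN conjunct2, THEN conjunct2, THEN conjunct2, rule_format]

lemma ip_add_right: "ip x (y + w) = ip x y + ip x w"
proof -
  have "ip x (y + w) = cnj (ip (y + w) x)" by (rule ip_cnj)
  also have "\<dots> = cnj (ip y x) + cnj (ip w x)" by (simp add: ip_add_left)
  also have "cnj (ip y x) = ip x y" by (rule ip_cnj[symmetric])
  also have "cnj (ip w x) = ip x w" by (rule ip_cnj[symmetric])
  finally show ?thesis .
qed

lemma ip_sc_right: "ip x (sc c y) = cnj c * ip x y"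
proof -
  have "ip x (sc c y) = cnj (ip (sc c y) x)" by (rule ip_cnj)
  also have "\<dots> = cnj c * cnj (ip y x)" by (simp add: ip_sc_left)
  also have "cnj (ip y x) = ip x y" by (rule ip_cnj[symmetric])
  finally show ?thesis .
qed

lemma ip_zero_left[simp]: "ip 0 y = 0"
  using ip_add_left[of 0 0 y] by simp

lemma ip_zero_right[simp]: "ip y 0 = 0"
  using ip_add_right[of y 0 0] by simp

lemma ip_minus_left: "ip (- x) y = - ip x y"
  using ip_add_left[of x "-x" y] by (simp add: eq_neg_iff_add_eq_0 add.commute)

lemma ip_minus_right: "ip y (- x) = - ip y x"
  using ip_add_right[of y x "-x"] by (simp add: eq_neg_iff_add_eq_0 add.commute)

lemma ip_diff_left: "ip (x - y) w = ip x w - ip y w"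
  using ip_add_left[of x "-y" w] ip_minus_left[of y w] by simp

lemma ip_diff_right: "ip w (x - y) = ip w x - ip w y"
  using ip_add_right[of w x "-y"] ip_minus_right[of w y] by simp

lemma ip_scaleR_left: "ip (r *\<^sub>R x) y = complex_of_real r * ip x y"
  using ip_sc_left[of "complex_of_real r" x y] by (simp only: sc_real)

lemma ip_scaleR_right: "ip y (r *\<^sub>R x) = complex_of_real r * ip y x"
  using ip_sc_right[of y "complex_of_real r" x] by (simp only: sc_real complex_cnj_complex_of_real)

lemma sc_zero_right[simp]: "sc a 0 = 0"
  using sc_add_right[of a 0 0] by simp

lemma sc_zero_left[simp]: "sc 0 x = 0"
  using sc_real[of 0 x] by simp

lemma sc_minus_right: "sc a (- x) = - sc a x"
  using sc_add_right[of a x "-x"] by (simp add: eq_neg_iff_add_eq_0 add.commute)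

lemma sc_diff_right: "sc a (x - y) = sc a x - sc a y"
  using sc_add_right[of a x "-y"] sc_minus_right[of a y] by simp

lemma sc_minus_left: "sc (- a) x = - sc a x"
  using sc_add_left[of a "-a" x] by (simp add: eq_neg_iff_add_eq_0 add.commute)

lemma sc_diff_left: "sc (a - b) x = sc a x - sc b x"
  using sc_add_left[of a "-b" x] sc_minus_left[of b x] by simp

lemma sc_scaleR_right: "sc a (r *\<^sub>R x) = r *\<^sub>R sc a x"
proof -
  have "sc a (r *\<^sub>R x) = sc a (sc (complex_of_real r) x)" by (simp only: sc_real)
  also have "\<dots> = sc (complex_of_real r * a) x" by (simp only: sc_mult[symmetric] mult.commute)
  also have "\<dots> = r *\<^sub>R sc a x" by (simp only: sc_mult sc_real)
  finally show ?thesis .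
qed

lemma sc_scaleR_left: "sc (r *\<^sub>R a) x = r *\<^sub>R sc a x"
  by (simp only: scaleR_conv_of_real sc_mult sc_real)

lemma ip_self_norm: "norm (ip x x) = (norm x)\<^sup>2"
  by (simp add: ip_self norm_of_real del: of_real_power)

lemma norm_sc: "norm (sc a x) = norm a * norm x"
proof -
  have "complex_of_real ((norm (sc a x))\<^sup>2) = ip (sc a x) (sc a x)" by (simp add: ip_self)
  also have "\<dots> = a * cnj a * ip x x" by (simp add: ip_sc_left ip_sc_right)
  also have "\<dots> = complex_of_real ((norm a)\<^sup>2 * (norm x)\<^sup>2)"
    by (simp only: ip_self complex_norm_square[symmetric] of_real_mult)
  finally have "(norm (sc a x))\<^sup>2 = (norm a * norm x)\<^sup>2"
    by (simp only: of_real_eq_iff power_mult_distrib)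
  then show ?thesis by (simp add: power2_eq_iff_nonneg)
qed

lemma re_ip_le: "2 * Re (ip u v) \<le> (norm u)\<^sup>2 + (norm v)\<^sup>2"
proof -
  have "complex_of_real ((norm (u - v))\<^sup>2) = ip (u - v) (u - v)" by (simp add: ip_self)
  also have "\<dots> = ip u u - ip u v - ip v u + ip v v"
    by (simp add: ip_diff_left ip_diff_right)
  finally have "Re (complex_of_real ((norm (u - v))\<^sup>2)) = Re (ip u u - ip u v - ip v u + ip v v)"
    by (rule arg_cong)
  then have "(norm (u - v))\<^sup>2 = Re (ip u u) - Re (ip u v) - Re (ip v u) + Re (ip v v)"
    by (simp only: Re_complex_of_real minus_complex.sel plus_complex.sel)
  moreover have "Re (ip v u) = Re (ip u v)" by (subst ip_cnj) simp
  ultimately have "(norm (u - v))\<^sup>2 = (norm u)\<^sup>2 + (norm v)\<^sup>2 - 2 * Re (ip u v)"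
    by (simp add: ip_self)
  then show ?thesis by (smt (verit) zero_le_power2)
qed

lemma re_ip_le_norm: "Re (ip u v) \<le> norm u * norm v"
proof (cases "u = 0 \<or> v = 0")
  case True then show ?thesis by auto
next
  case False
  define r where "r = sqrt (norm v / norm u)"
  have r0: "r > 0" using False by (simp add: r_def)
  have rr: "r\<^sup>2 = norm v / norm u" using False by (simp add: r_def)
  have "2 * Re (ip (r *\<^sub>R u) ((1/r) *\<^sub>R v)) \<le> (norm (r *\<^sub>R u))\<^sup>2 + (norm ((1/r) *\<^sub>R v))\<^sup>2"
    by (rule re_ip_le)
  moreover have "ip (r *\<^sub>R u) ((1/r) *\<^sub>R v) = ip u v"
    using r0 by (simp add: ip_scaleR_left ip_scaleR_right)
  moreover have "(norm (r *\<^sub>R u))\<^sup>2 = norm u * norm v"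
  proof -
    have "(norm (r *\<^sub>R u))\<^sup>2 = r\<^sup>2 * (norm u)\<^sup>2" using r0 by (simp add: power_mult_distrib)
    also have "\<dots> = norm v / norm u * (norm u)\<^sup>2" by (simp add: rr)
    also have "\<dots> = norm u * norm v" using False by (simp add: power2_eq_square field_simps)
    finally show ?thesis .
  qed
  moreover have "(norm ((1/r) *\<^sub>R v))\<^sup>2 = norm u * norm v"
  proof -
    have "(norm ((1/r) *\<^sub>R v))\<^sup>2 = (norm v)\<^sup>2 / r\<^sup>2" using r0 by (simp add: power_mult_distrib power_divide)
    also have "\<dots> = (norm v)\<^sup>2 / (norm v / norm u)" by (simp add: rr)
    also have "\<dots> = norm u * norm v" using False by (simp add: power2_eq_square field_simps)
    finally show ?thesis .
  qed
  ultimately show ?thesis by simp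
qed

lemma ip_cs: "norm (ip x y) \<le> norm x * norm y"
proof (cases "ip x y = 0")
  case True then show ?thesis by simp
next
  case False
  define a where "a = cnj (ip x y) / norm (ip x y)"
  have na: "norm a = 1" using False by (simp add: a_def norm_divide)
  have e: "cnj (ip x y) * ip x y = complex_of_real (cmod (ip x y)) * complex_of_real (cmod (ip x y))"
    by (metis complex_norm_square mult.commute of_real_mult power2_eq_square)
  have "ip (sc a x) y = cnj (ip x y) * ip x y / complex_of_real (cmod (ip x y))"
    by (simp add: ip_sc_left a_def)
  also have "\<dots> = complex_of_real (norm (ip x y))" using e False by simp
  finally have "ip (sc a x) y = complex_of_real (norm (ip x y))" .
  then have "norm (ip x y) = Re (ip (sc a x) y)" by simp
  also have "\<dots> \<le> norm (sc a x) * norm y" by (rule re_ip_le_norm)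
  also have "\<dots> = norm x * norm y" by (simp add: norm_sc na)
  finally show ?thesis .
qed

lemma bb_ip: "bounded_bilinear ip"
proof (rule bounded_bilinear.intro)
  show "ip (a + a') b = ip a b + ip a' b" for a a' b by (rule ip_add_left)
  show "ip a (b + b') = ip a b + ip a b'" for a b b' by (rule ip_add_right)
  show "ip (r *\<^sub>R a) b = r *\<^sub>R ip a b" for r a b by (simp add: ip_scaleR_left scaleR_conv_of_real)
  show "ip a (r *\<^sub>R b) = r *\<^sub>R ip a b" for r a b by (simp add: ip_scaleR_right scaleR_conv_of_real)
  show "\<exists>K. \<forall>a b. norm (ip a b) \<le> norm a * norm b * K"
    by (rule exI[of _ 1]) (simp add: ip_cs)
qed

lemma bb_sc: "bounded_bilinear sc"
proof (rule bounded_bilinear.intro)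
  show "sc (a + a') b = sc a b + sc a' b" for a a' b by (rule sc_add_left)
  show "sc a (b + b') = sc a b + sc a b'" for a b b' by (rule sc_add_right)
  show "sc (r *\<^sub>R a) b = r *\<^sub>R sc a b" for r a b by (rule sc_scaleR_left)
  show "sc a (r *\<^sub>R b) = r *\<^sub>R sc a b" for r a b by (rule sc_scaleR_right)
  show "\<exists>K. \<forall>a b. norm (sc a b) \<le> norm a * norm b * K"
    by (rule exI[of _ 1]) (simp add: norm_sc)
qed

lemmas ip_bl_left = bounded_bilinear.bounded_linear_left[OF bb_ip]
lemmas ip_bl_right = bounded_bilinear.bounded_linear_right[OF bb_ip]
lemmas sc_bl_left = bounded_bilinear.bounded_linear_left[OF bb_sc]
lemmas sc_bl_right = bounded_bilinear.bounded_linear_right[OF bb_sc]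

lemma continuous_on_ip[continuous_intros]:
  "continuous_on S f \<Longrightarrow> continuous_on S g \<Longrightarrow> continuous_on S (\<lambda>x. ip (f x) (g x))"
  by (rule bounded_bilinear.continuous_on[OF bb_ip])

lemma continuous_on_sc[continuous_intros]:
  "continuous_on S f \<Longrightarrow> continuous_on S g \<Longrightarrow> continuous_on S (\<lambda>x. sc (f x) (g x))"
  by (rule bounded_bilinear.continuous_on[OF bb_sc])

lemma tendsto_ip[tendsto_intros]:
  "(f \<longlongrightarrow> a) F \<Longrightarrow> (g \<longlongrightarrow> b) F \<Longrightarrow> ((\<lambda>x. ip (f x) (g x)) \<longlongrightarrow> ip a b) F"
  by (rule bounded_bilinear.tendsto[OF bb_ip])

lemma ip_self_eq_0: "ip x x = 0 \<longleftrightarrow> x = 0"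
  by (simp add: ip_self)

end

lemmas hk_combine = Henstock_Kurzweil_Integration.integral_combine

lemma conv_reflect:
  fixes h :: "real \<Rightarrow> 'b::banach"
  shows "integral {0..t} (\<lambda>s. h (t - s)) = integral {0..t} h"
proof -
  have "integral {-t..-0} (\<lambda>x. (\<lambda>s. h (t - s)) (-x)) = integral {0..t} (\<lambda>s. h (t - s))"
    using Henstock_Kurzweil_Integration.integral_reflect_real[where f="\<lambda>s. h (t - s)" and a=0 and b=t] by simp
  then have 1: "integral {0..t} (\<lambda>s. h (t - s)) = integral {-t..0} (\<lambda>x. h (x + t))"
    by (simp add: add.commute)
  have "integral {0-t..t-t} (\<lambda>x. h (x + t)) = integral {0..t} h"
    by (rule integral_shift_real_ivl)
  then show ?thesis using 1 by simp
qed

lemma split_shift: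
  fixes h :: "real \<Rightarrow> 'b::banach"
  assumes "continuous_on {0..t+s} h" "0 \<le> t" "0 \<le> s"
  shows "integral {0..t+s} h = integral {0..t} h + integral {0..s} (\<lambda>\<sigma>. h (t + \<sigma>))"
proof -
  have "integral {0..t} h + integral {t..t+s} h = integral {0..t+s} h"
    using assms by (intro hk_combine integrable_continuous_real) auto
  moreover have "integral {t-t..(t+s)-t} (\<lambda>x. h (x + t)) = integral {t..t+s} h"
    by (rule integral_shift_real_ivl)
  ultimately show ?thesis by (simp add: add.commute)
qed

lemma gronwall:
  fixes \<phi> :: "real \<Rightarrow> real"
  assumes cont: "continuous_on {0..T} \<phi>" and K: "K \<ge> 0"
    and le: "\<And>t. t \<in> {0..T} \<Longrightarrow> \<phi> t \<le> A + K * integral {0..t} \<phi>"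
    and t: "t \<in> {0..T}"
  shows "\<phi> t \<le> A * exp (K * t)"
proof -
  define \<Psi> where "\<Psi> t = A + K * integral {0..t} \<phi>" for t
  define \<Lambda> where "\<Lambda> t = exp (- K * t) * \<Psi> t" for t
  have ic: "continuous_on {0..T} (\<lambda>t. integral {0..t} \<phi>)"
    by (rule indefinite_integral_continuous_1[OF integrable_continuous_real[OF cont]])
  have cL: "continuous_on {0..t} \<Lambda>"
    unfolding \<Lambda>_def \<Psi>_def
    by (intro continuous_intros continuous_on_subset[OF ic]) (use t in auto)
  have "\<Lambda> t \<le> \<Lambda> 0"
  proof (rule DERIV_nonpos_imp_decreasing_open[OF _ _ cL])
    show "0 \<le> t" using t by simp
    fix x assume x: "0 < x" "x < t"
    then have xi: "x \<in> interior {0..T}" using t by simp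
    have d1: "((\<lambda>u. integral {0..u} \<phi>) has_real_derivative \<phi> x) (at x)"
      using integral_has_real_derivative[OF cont, of x] x t at_within_interior[OF xi] by simp
    have "(\<Lambda> has_real_derivative (exp (- K * x) * (K * \<phi> x - K * \<Psi> x))) (at x)"
      unfolding \<Lambda>_def \<Psi>_def
      by (rule derivative_eq_intros d1 refl | simp add: algebra_simps)+
    moreover have "exp (- K * x) * (K * \<phi> x - K * \<Psi> x) \<le> 0"
    proof -
      have "\<phi> x \<le> \<Psi> x" using le[of x] x t by (simp add: \<Psi>_def)
      then have "K * \<phi> x - K * \<Psi> x \<le> 0" using K by (simp add: mult_left_mono)
      then show ?thesis by (simp add: mult_nonneg_nonpos)
    qed
    ultimately show "\<exists>y. (\<Lambda> has_real_derivative y) (at x) \<and> y \<le> 0" by blast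
  qed
  then have "exp (- K * t) * \<Psi> t \<le> A" by (simp add: \<Lambda>_def \<Psi>_def)
  then have "\<Psi> t \<le> A * exp (K * t)"
    by (simp add: exp_minus field_simps)
  then show ?thesis using le[OF t] by (simp add: \<Psi>_def)
qed

lemma integral_cmult:
  fixes f :: "real \<Rightarrow> complex"
  assumes "f integrable_on S"
  shows "integral S (\<lambda>x. c * f x) = c * integral S f"
  using integral_linear[OF assms bounded_linear_mult_right[of c]] by (simp add: o_def)

lemma integral_multc:
  fixes f :: "real \<Rightarrow> complex"
  assumes "f integrable_on S"
  shows "integral S (\<lambda>x. f x * c) = integral S f * c"
  using integral_linear[OF assms bounded_linear_mult_left[of c]] by (simp add: o_def)

lemma cont_refl:
  fixes \<phi> :: "real \<Rightarrow> 'b::real_normed_vector"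
  assumes "continuous_on {0..} \<phi>" "t \<le> T"
  shows "continuous_on {0..t} (\<lambda>s. \<phi> (T - s))"
  by (rule continuous_on_compose2[OF assms(1)]) (use assms(2) in \<open>auto intro!: continuous_intros\<close>)

lemma conv_int:
  fixes \<phi> \<psi> :: "real \<Rightarrow> complex"
  assumes "continuous_on {0..} \<phi>" "continuous_on {0..} \<psi>"
  shows "(\<lambda>s. \<phi> (t - s) * \<psi> s) integrable_on {0..t}"
  by (intro integrable_continuous_real continuous_intros cont_refl assms continuous_on_subset[OF assms(2)]) auto

lemma deriv_eq:
  fixes F G :: "real \<Rightarrow> 'b::real_normed_vector"
  assumes "\<And>\<tau>. \<tau> \<in> {0..T} \<Longrightarrow> (F has_vector_derivative d \<tau>) (at \<tau> within {0..T})"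
    and "\<And>\<tau>. \<tau> \<in> {0..T} \<Longrightarrow> (G has_vector_derivative d \<tau>) (at \<tau> within {0..T})"
    and "F 0 = G 0" and t: "t \<in> {0..T}"
  shows "F t = G t"
proof -
  have "\<exists>c. \<forall>x\<in>{0..T}. F x - G x = c"
  proof (rule has_derivative_zero_constant)
    show "convex {0..T}" by simp
    fix x assume x: "x \<in> {0..T}"
    have "((\<lambda>x. F x - G x) has_vector_derivative (d x - d x)) (at x within {0..T})"
      by (intro has_vector_derivative_diff assms x)
    then show "((\<lambda>x. F x - G x) has_derivative (\<lambda>h. 0)) (at x within {0..T})"
      by (simp add: has_vector_derivative_def)
  qed
  then obtain c where c: "\<forall>x\<in>{0..T}. F x - G x = c" by blast
  have "0 \<in> {0..T}" using t by simp
  then have "c = 0" using c assms(3) by force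
  then show ?thesis using c t by simp
qed

lemma FB:
  fixes \<phi> g :: "real \<Rightarrow> complex"
  assumes \<phi>c: "continuous_on {0..T} \<phi>" and gc: "continuous_on {-T..T} g"
    and g0: "\<And>v. v \<in> {-T..0} \<Longrightarrow> g v = 0" and t: "0 \<le> t" "t \<le> T"
  shows "integral {0..t} (\<lambda>s. \<phi> (t - s) * g s) = integral {0..T} (\<lambda>s. \<phi> s * g (t - s))"
proof -
  have 1: "integral {0..t} (\<lambda>s. \<phi> (t - s) * g s) = integral {0..t} (\<lambda>s. \<phi> s * g (t - s))"
    using conv_reflect[of t "\<lambda>s. \<phi> (t - s) * g s"] by simp
  have 2: "integral {t..T} (\<lambda>s. \<phi> s * g (t - s)) = 0"
  proof -
    have "integral {t..T} (\<lambda>s. \<phi> s * g (t - s)) = integral {t..T} (\<lambda>s. 0)"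
      by (rule integral_cong) (use g0 t in auto)
    then show ?thesis by simp
  qed
  have c: "continuous_on {0..T} (\<lambda>s. \<phi> s * g (t - s))"
    by (intro continuous_intros \<phi>c continuous_on_compose2[OF gc]) (use t in auto)
  have 3: "integral {0..t} (\<lambda>s. \<phi> s * g (t - s)) + integral {t..T} (\<lambda>s. \<phi> s * g (t - s))
     = integral {0..T} (\<lambda>s. \<phi> s * g (t - s))"
    using t by (intro hk_combine integrable_continuous_real c) auto
  show ?thesis using 1 2 3 by simp
qed

lemma conv_cont:
  fixes \<phi> \<psi> :: "real \<Rightarrow> complex"
  assumes \<phi>c: "continuous_on {0..} \<phi>" and \<psi>c: "continuous_on {0..} \<psi>"
  shows "continuous_on {0..T} (\<lambda>t. integral {0..t} (\<lambda>s. \<phi> (t - s) * \<psi> s))"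
proof -
  define g where "g v = \<psi> (max v 0) - \<psi> 0" for v
  have gc: "continuous_on UNIV g"
    unfolding g_def by (intro continuous_intros continuous_on_compose2[OF \<psi>c]) auto
  have \<phi>T: "continuous_on {0..T} \<phi>" by (rule continuous_on_subset[OF \<phi>c]) auto
  have eq: "integral {0..t} (\<lambda>s. \<phi> (t - s) * \<psi> s) =
      \<psi> 0 * integral {0..t} \<phi> + integral {0..T} (\<lambda>s. \<phi> s * g (t - s))" if t: "t \<in> {0..T}" for t
  proof -
    have i1: "(\<lambda>s. \<phi> (t - s)) integrable_on {0..t}"
      by (intro integrable_continuous_real cont_refl \<phi>c) auto
    have i2: "(\<lambda>s. \<phi> (t - s) * g s) integrable_on {0..t}"
      by (intro integrable_continuous_real continuous_intros cont_refl \<phi>c continuous_on_subset[OF gc]) auto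
    have "integral {0..t} (\<lambda>s. \<phi> (t - s) * \<psi> s) = integral {0..t} (\<lambda>s. \<psi> 0 * \<phi> (t - s) + \<phi> (t - s) * g s)"
      by (rule integral_cong) (auto simp: g_def algebra_simps)
    also have "\<dots> = \<psi> 0 * integral {0..t} (\<lambda>s. \<phi> (t - s)) + integral {0..t} (\<lambda>s. \<phi> (t - s) * g s)"
    proof -
      have i1': "(\<lambda>s. \<psi> 0 * \<phi> (t - s)) integrable_on {0..t}"
        by (intro integrable_continuous_real continuous_intros cont_refl \<phi>c) auto
      show ?thesis by (simp add: integral_add[OF i1' i2] integral_cmult[OF i1])
    qed
    also have "integral {0..t} (\<lambda>s. \<phi> (t - s)) = integral {0..t} \<phi>" by (rule conv_reflect)
    also have "integral {0..t} (\<lambda>s. \<phi> (t - s) * g s) = integral {0..T} (\<lambda>s. \<phi> s * g (t - s))"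
      by (rule FB[OF \<phi>T continuous_on_subset[OF gc]]) (use t in \<open>auto simp: g_def\<close>)
    finally show ?thesis .
  qed
  have "continuous_on {0..T} (\<lambda>t. \<psi> 0 * integral {0..t} \<phi> + integral {0..T} (\<lambda>s. \<phi> s * g (t - s)))"
  proof (intro continuous_intros)
    show "continuous_on {0..T} (\<lambda>t. integral {0..t} \<phi>)"
      by (rule indefinite_integral_continuous_1[OF integrable_continuous_real[OF \<phi>T]])
    have "continuous_on {0..T} (\<lambda>t. integral (cbox 0 T) (\<lambda>s. \<phi> s * g (t - s)))"
    proof (rule integral_continuous_on_param)
      show "continuous_on ({0..T} \<times> cbox 0 T) (\<lambda>(t, s). \<phi> s * g (t - s))"
        by (auto simp: split_beta intro!: continuous_intros continuous_on_compose2[OF \<phi>T]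
             continuous_on_compose2[OF gc])
    qed
    then show "continuous_on {0..T} (\<lambda>t. integral {0..T} (\<lambda>s. \<phi> s * g (t - s)))" by simp
  qed
  then show ?thesis by (rule continuous_on_eq) (use eq in auto)
qed

lemma deriv_conv_id:
  fixes \<phi> :: "real \<Rightarrow> complex"
  assumes \<phi>c: "continuous_on {0..} \<phi>" and \<tau>: "\<tau> \<in> {0..T}"
  shows "((\<lambda>\<tau>. integral {0..\<tau>} (\<lambda>s. \<phi> (\<tau> - s) * complex_of_real s)) has_vector_derivative
           integral {0..\<tau>} \<phi>) (at \<tau> within {0..T})"
proof -
  have \<phi>T: "continuous_on {0..T} \<phi>" by (rule continuous_on_subset[OF \<phi>c]) auto
  have \<chi>T: "continuous_on {0..T} (\<lambda>s. complex_of_real s * \<phi> s)" by (intro continuous_intros \<phi>T)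
  have eq: "integral {0..x} (\<lambda>s. \<phi> (x - s) * complex_of_real s) =
     complex_of_real x * integral {0..x} \<phi> - integral {0..x} (\<lambda>s. complex_of_real s * \<phi> s)"
    if x: "x \<in> {0..T}" for x
  proof -
    have i1: "\<phi> integrable_on {0..x}"
      by (intro integrable_continuous_real continuous_on_subset[OF \<phi>c]) auto
    have i2: "(\<lambda>s. complex_of_real s * \<phi> s) integrable_on {0..x}"
      by (intro integrable_continuous_real continuous_intros continuous_on_subset[OF \<phi>c]) auto
    have i3: "(\<lambda>s. complex_of_real x * \<phi> s) integrable_on {0..x}"
      by (intro integrable_continuous_real continuous_intros continuous_on_subset[OF \<phi>c]) auto
    have "integral {0..x} (\<lambda>s. \<phi> (x - s) * complex_of_real s) = integral {0..x} (\<lambda>s. \<phi> s * complex_of_real (x - s))"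
      using conv_reflect[of x "\<lambda>s. \<phi> (x - s) * complex_of_real s"] by simp
    also have "\<dots> = integral {0..x} (\<lambda>s. complex_of_real x * \<phi> s - complex_of_real s * \<phi> s)"
      by (rule integral_cong) (simp add: algebra_simps)
    also have "\<dots> = complex_of_real x * integral {0..x} \<phi> - integral {0..x} (\<lambda>s. complex_of_real s * \<phi> s)"
      by (simp add: integral_diff[OF i3 i2] integral_cmult[OF i1])
    finally show ?thesis .
  qed
  have d1: "((\<lambda>x. integral {0..x} \<phi>) has_vector_derivative \<phi> \<tau>) (at \<tau> within {0..T})"
    by (rule integral_has_vector_derivative[OF \<phi>T \<tau>])
  have d2: "((\<lambda>x. integral {0..x} (\<lambda>s. complex_of_real s * \<phi> s)) has_vector_derivative
       complex_of_real \<tau> * \<phi> \<tau>) (at \<tau> within {0..T})"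
    by (rule integral_has_vector_derivative[OF \<chi>T \<tau>])
  have d3: "((\<lambda>x. complex_of_real x) has_vector_derivative 1) (at \<tau> within {0..T})"
    using has_vector_derivative_of_real[OF DERIV_ident] by simp
  have "((\<lambda>x. complex_of_real x * integral {0..x} \<phi> - integral {0..x} (\<lambda>s. complex_of_real s * \<phi> s))
     has_vector_derivative (complex_of_real \<tau> * \<phi> \<tau> + 1 * integral {0..\<tau>} \<phi> - complex_of_real \<tau> * \<phi> \<tau>))
     (at \<tau> within {0..T})"
    by (intro has_vector_derivative_diff has_vector_derivative_mult d1 d2 d3)
  then have "((\<lambda>x. complex_of_real x * integral {0..x} \<phi> - integral {0..x} (\<lambda>s. complex_of_real s * \<phi> s))
     has_vector_derivative integral {0..\<tau>} \<phi>) (at \<tau> within {0..T})" by simp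
  then show ?thesis
    by (rule has_vector_derivative_transform[OF \<tau>, rotated]) (use eq in auto)
qed

lemma deriv_conv_K0:
  fixes \<phi> k0 :: "real \<Rightarrow> complex"
  assumes \<phi>c: "continuous_on {0..} \<phi>" and kc: "continuous_on {0..} k0" and k00: "k0 0 = 0"
    and \<tau>: "\<tau> \<in> {0..T}"
  shows "((\<lambda>\<tau>. integral {0..\<tau>} (\<lambda>s. \<phi> (\<tau> - s) * integral {0..s} k0)) has_vector_derivative
           integral {0..\<tau>} (\<lambda>s. \<phi> (\<tau> - s) * k0 s)) (at \<tau> within {0..T})"
proof -
  have T: "0 \<le> T" using \<tau> by simp
  have \<phi>T: "continuous_on {0..T} \<phi>" by (rule continuous_on_subset[OF \<phi>c]) auto
  define kt where "kt v = k0 (max v 0)" for v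
  have ktc: "continuous_on UNIV kt"
    unfolding kt_def by (intro continuous_intros continuous_on_compose2[OF kc]) auto
  have kt0: "kt v = 0" if "v \<le> 0" for v using that k00 by (simp add: kt_def)
  define Kt where "Kt v = integral {-(T+1)..v} kt" for v
  have Kt0: "Kt v = 0" if "v \<le> 0" for v
  proof -
    have "Kt v = integral {-(T+1)..v} (\<lambda>_. 0::complex)"
      unfolding Kt_def by (rule integral_cong) (use that kt0 in auto)
    then show ?thesis by simp
  qed
  have Ktpos: "Kt v = integral {0..v} k0" if "v \<ge> 0" for v
  proof -
    have "integral {-(T+1)..0} kt + integral {0..v} kt = Kt v"
      unfolding Kt_def using that T by (intro hk_combine integrable_continuous_real continuous_on_subset[OF ktc]) auto
    moreover have "integral {-(T+1)..0} kt = 0" using Kt0[of 0] by (simp add: Kt_def)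
    moreover have "integral {0..v} kt = integral {0..v} k0"
      by (rule integral_cong) (auto simp: kt_def)
    ultimately show ?thesis by simp
  qed
  have Ktc: "continuous_on {-T..T} Kt"
  proof -
    have "continuous_on {-(T+1)..T+1} Kt"
      unfolding Kt_def by (intro indefinite_integral_continuous_1 integrable_continuous_real continuous_on_subset[OF ktc]) auto
    then show ?thesis by (rule continuous_on_subset) auto
  qed
  have Ktd: "(Kt has_vector_derivative kt v) (at v)" if "v \<in> {-T..T}" for v
  proof -
    have vi: "v \<in> interior {-(T+1)..T+1}" using that by simp
    have "(Kt has_vector_derivative kt v) (at v within {-(T+1)..T+1})"
      unfolding Kt_def by (rule integral_has_vector_derivative) (use that continuous_on_subset[OF ktc] in auto)
    then show ?thesis using at_within_interior[OF vi] by simp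
  qed
  have eq: "integral {0..x} (\<lambda>s. \<phi> (x - s) * integral {0..s} k0) = integral {0..T} (\<lambda>s. \<phi> s * Kt (x - s))"
    if x: "x \<in> {0..T}" for x
  proof -
    have "integral {0..x} (\<lambda>s. \<phi> (x - s) * integral {0..s} k0) = integral {0..x} (\<lambda>s. \<phi> (x - s) * Kt s)"
      by (rule integral_cong) (simp add: Ktpos)
    also have "\<dots> = integral {0..T} (\<lambda>s. \<phi> s * Kt (x - s))"
      by (rule FB[OF \<phi>T Ktc]) (use x Kt0 in auto)
    finally show ?thesis .
  qed
  have L: "((\<lambda>x. integral (cbox 0 T) (\<lambda>s. \<phi> s * Kt (x - s))) has_vector_derivative
      integral (cbox 0 T) (\<lambda>s. \<phi> s * kt (\<tau> - s))) (at \<tau> within {0..T})"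
  proof (rule leibniz_rule_vector_derivative)
    fix x t assume x: "x \<in> {0..T}" and t: "t \<in> cbox 0 T"
    have "((\<lambda>x. x - t) has_vector_derivative 1) (at x within {0..T})"
      by (auto intro!: derivative_eq_intros)
    moreover have "(Kt has_vector_derivative kt (x - t)) (at (x - t) within (\<lambda>x. x - t) ` {0..T})"
      by (rule has_vector_derivative_at_within, rule Ktd) (use x t in auto)
    ultimately have "((Kt \<circ> (\<lambda>x. x - t)) has_vector_derivative (1 *\<^sub>R kt (x - t))) (at x within {0..T})"
      by (rule vector_diff_chain_within)
    then have "((\<lambda>x. Kt (x - t)) has_vector_derivative kt (x - t)) (at x within {0..T})"
      by (simp add: o_def)
    then show "((\<lambda>x. \<phi> t * Kt (x - t)) has_vector_derivative \<phi> t * kt (x - t)) (at x within {0..T})"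
      by (rule has_vector_derivative_mult_right)
  next
    fix x assume x: "x \<in> {0..T}"
    show "(\<lambda>s. \<phi> s * Kt (x - s)) integrable_on cbox 0 T"
      unfolding cbox_interval
      by (intro integrable_continuous_real continuous_intros \<phi>T continuous_on_compose2[OF Ktc]) (use x in auto)
  next
    show "continuous_on ({0..T} \<times> cbox 0 T) (\<lambda>(x, t). \<phi> t * kt (x - t))"
      by (auto simp: split_beta intro!: continuous_intros continuous_on_compose2[OF \<phi>T]
             continuous_on_compose2[OF ktc])
  qed (use \<tau> in auto)
  have "integral (cbox 0 T) (\<lambda>s. \<phi> s * kt (\<tau> - s)) = integral {0..\<tau>} (\<lambda>s. \<phi> (\<tau> - s) * kt s)"
    using FB[OF \<phi>T continuous_on_subset[OF ktc], of \<tau>] \<tau> kt0 by auto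
  also have "\<dots> = integral {0..\<tau>} (\<lambda>s. \<phi> (\<tau> - s) * k0 s)"
    by (rule integral_cong) (simp add: kt_def)
  finally have "((\<lambda>x. integral {0..T} (\<lambda>s. \<phi> s * Kt (x - s))) has_vector_derivative
      integral {0..\<tau>} (\<lambda>s. \<phi> (\<tau> - s) * k0 s)) (at \<tau> within {0..T})"
    using L by simp
  then show ?thesis
    by (rule has_vector_derivative_transform[OF \<tau>, rotated]) (use eq in auto)
qed

lemma assoc:
  fixes \<phi> k :: "real \<Rightarrow> complex"
  assumes \<phi>c: "continuous_on {0..} \<phi>" and kc: "continuous_on {0..} k" and t: "0 \<le> t"
  shows "integral {0..t} (\<lambda>s. \<phi> (t - s) * integral {0..s} k) =
         integral {0..t} (\<lambda>u. integral {0..u} (\<lambda>\<sigma>. \<phi> (u - \<sigma>) * k \<sigma>))"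
proof -
  define k0 where "k0 s = k s - k 0" for s
  have k0c: "continuous_on {0..} k0" unfolding k0_def by (intro continuous_intros kc)
  have k00: "k0 0 = 0" by (simp add: k0_def)
  have Ik: "integral {0..s} k = complex_of_real s * k 0 + integral {0..s} k0" if s: "0 \<le> s" for s
  proof -
    have ik: "k integrable_on {0..s}" by (intro integrable_continuous_real continuous_on_subset[OF kc]) auto
    have "integral {0..s} k0 = integral {0..s} k - integral {0..s} (\<lambda>_. k 0)"
      unfolding k0_def by (rule integral_diff[OF ik integrable_const_ivl])
    also have "integral {0..s} (\<lambda>_. k 0) = complex_of_real s * k 0"
      using s by (simp add: scaleR_conv_of_real)
    finally show ?thesis by simp
  qed
  have Ic: "continuous_on {0..x} (\<lambda>s. integral {0..s} k0)" for x
    by (intro indefinite_integral_continuous_1 integrable_continuous_real continuous_on_subset[OF k0c]) auto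
  have eqL: "integral {0..x} (\<lambda>s. \<phi> (x - s) * integral {0..s} k) =
      k 0 * integral {0..x} (\<lambda>s. \<phi> (x - s) * complex_of_real s) + integral {0..x} (\<lambda>s. \<phi> (x - s) * integral {0..s} k0)"
    if x: "x \<in> {0..t}" for x
  proof -
    have i1: "(\<lambda>s. \<phi> (x - s) * complex_of_real s) integrable_on {0..x}"
      by (intro integrable_continuous_real continuous_intros cont_refl \<phi>c) auto
    have i1': "(\<lambda>s. k 0 * (\<phi> (x - s) * complex_of_real s)) integrable_on {0..x}"
      by (intro integrable_continuous_real continuous_intros cont_refl \<phi>c) auto
    have i2: "(\<lambda>s. \<phi> (x - s) * integral {0..s} k0) integrable_on {0..x}"
      by (intro integrable_continuous_real continuous_intros cont_refl \<phi>c Ic) auto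
    have "integral {0..x} (\<lambda>s. \<phi> (x - s) * integral {0..s} k) =
        integral {0..x} (\<lambda>s. k 0 * (\<phi> (x - s) * complex_of_real s) + \<phi> (x - s) * integral {0..s} k0)"
      by (rule integral_cong) (simp add: Ik algebra_simps)
    also have "\<dots> = k 0 * integral {0..x} (\<lambda>s. \<phi> (x - s) * complex_of_real s) + integral {0..x} (\<lambda>s. \<phi> (x - s) * integral {0..s} k0)"
      by (simp add: integral_add[OF i1' i2] integral_cmult[OF i1])
    finally show ?thesis .
  qed
  have convk: "integral {0..\<tau>} (\<lambda>s. \<phi> (\<tau> - s) * k s) = k 0 * integral {0..\<tau>} \<phi> + integral {0..\<tau>} (\<lambda>s. \<phi> (\<tau> - s) * k0 s)"
    if \<tau>: "\<tau> \<in> {0..t}" for \<tau>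
  proof -
    have i1: "(\<lambda>s. \<phi> (\<tau> - s)) integrable_on {0..\<tau>}"
      by (intro integrable_continuous_real cont_refl \<phi>c) auto
    have i1': "(\<lambda>s. k 0 * \<phi> (\<tau> - s)) integrable_on {0..\<tau>}"
      by (intro integrable_continuous_real continuous_intros cont_refl \<phi>c) auto
    have i2: "(\<lambda>s. \<phi> (\<tau> - s) * k0 s) integrable_on {0..\<tau>}"
      by (rule conv_int[OF \<phi>c k0c])
    have "integral {0..\<tau>} (\<lambda>s. \<phi> (\<tau> - s) * k s) = integral {0..\<tau>} (\<lambda>s. k 0 * \<phi> (\<tau> - s) + \<phi> (\<tau> - s) * k0 s)"
      by (rule integral_cong) (simp add: k0_def algebra_simps)
    also have "\<dots> = k 0 * integral {0..\<tau>} (\<lambda>s. \<phi> (\<tau> - s)) + integral {0..\<tau>} (\<lambda>s. \<phi> (\<tau> - s) * k0 s)"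
      by (simp add: integral_add[OF i1' i2] integral_cmult[OF i1])
    also have "integral {0..\<tau>} (\<lambda>s. \<phi> (\<tau> - s)) = integral {0..\<tau>} \<phi>" by (rule conv_reflect)
    finally show ?thesis .
  qed
  show ?thesis
  proof (rule deriv_eq[where d="\<lambda>\<tau>. integral {0..\<tau>} (\<lambda>s. \<phi> (\<tau> - s) * k s)" and T=t
      and F="\<lambda>t. integral {0..t} (\<lambda>s. \<phi> (t - s) * integral {0..s} k)"
      and G="\<lambda>t. integral {0..t} (\<lambda>u. integral {0..u} (\<lambda>\<sigma>. \<phi> (u - \<sigma>) * k \<sigma>))"])
    fix \<tau> assume \<tau>: "\<tau> \<in> {0..t}"
    have "((\<lambda>x. k 0 * integral {0..x} (\<lambda>s. \<phi> (x - s) * complex_of_real s) + integral {0..x} (\<lambda>s. \<phi> (x - s) * integral {0..s} k0))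
       has_vector_derivative (k 0 * integral {0..\<tau>} \<phi> + integral {0..\<tau>} (\<lambda>s. \<phi> (\<tau> - s) * k0 s))) (at \<tau> within {0..t})"
      by (intro has_vector_derivative_add has_vector_derivative_mult_right deriv_conv_id deriv_conv_K0 \<phi>c k0c k00 \<tau>)
    then have "((\<lambda>x. k 0 * integral {0..x} (\<lambda>s. \<phi> (x - s) * complex_of_real s) + integral {0..x} (\<lambda>s. \<phi> (x - s) * integral {0..s} k0))
       has_vector_derivative integral {0..\<tau>} (\<lambda>s. \<phi> (\<tau> - s) * k s)) (at \<tau> within {0..t})"
      using convk[OF \<tau>] by simp
    then show "((\<lambda>t. integral {0..t} (\<lambda>s. \<phi> (t - s) * integral {0..s} k)) has_vector_derivative
        integral {0..\<tau>} (\<lambda>s. \<phi> (\<tau> - s) * k s)) (at \<tau> within {0..t})"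
      by (rule has_vector_derivative_transform[OF \<tau>, rotated]) (use eqL in auto)
  next
    fix \<tau> assume \<tau>: "\<tau> \<in> {0..t}"
    show "((\<lambda>t. integral {0..t} (\<lambda>u. integral {0..u} (\<lambda>\<sigma>. \<phi> (u - \<sigma>) * k \<sigma>))) has_vector_derivative
        integral {0..\<tau>} (\<lambda>s. \<phi> (\<tau> - s) * k s)) (at \<tau> within {0..t})"
      by (rule integral_has_vector_derivative[OF conv_cont[OF \<phi>c kc] \<tau>])
  qed (use t in auto)
qed

lemma cont_bound:
  fixes f :: "real \<Rightarrow> 'b::real_normed_vector"
  assumes "continuous_on {a..b} f"
  shows "\<exists>B\<ge>0. \<forall>x\<in>{a..b}. norm (f x) \<le> B"
proof -
  have "compact (f ` {a..b})" by (rule compact_continuous_image[OF assms compact_Icc])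
  then obtain B where "B > 0" "\<forall>y\<in>f ` {a..b}. norm y \<le> B"
    using compact_imp_bounded bounded_pos by metis
  then show ?thesis by (intro exI[of _ B]) auto
qed

lemma volterra_bound:
  fixes \<phi> k a :: "real \<Rightarrow> complex"
  assumes \<phi>c: "continuous_on {0..} \<phi>" and kc: "continuous_on {0..} k"
    and eq: "\<And>t. t \<in> {0..T} \<Longrightarrow> \<phi> t = a t - integral {0..t} (\<lambda>s. \<phi> (t - s) * k s)"
    and A: "\<And>t. t \<in> {0..T} \<Longrightarrow> norm (a t) \<le> A"
    and B: "\<And>s. s \<in> {0..T} \<Longrightarrow> norm (k s) \<le> B" and B0: "B \<ge> 0"
    and t: "t \<in> {0..T}"
  shows "norm (\<phi> t) \<le> A * exp (B * t)"
proof (rule gronwall[where \<phi>="\<lambda>t. norm (\<phi> t)" and T=T, OF _ B0 _ t])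
  show "continuous_on {0..T} (\<lambda>t. norm (\<phi> t))"
    by (intro continuous_intros continuous_on_subset[OF \<phi>c]) auto
  fix t assume t: "t \<in> {0..T}"
  have i1: "(\<lambda>s. \<phi> (t - s) * k s) integrable_on {0..t}" by (rule conv_int[OF \<phi>c kc])
  have i2: "(\<lambda>s. norm (\<phi> (t - s)) * B) integrable_on {0..t}"
    by (intro integrable_continuous_real continuous_intros cont_refl \<phi>c) auto
  have "norm (integral {0..t} (\<lambda>s. \<phi> (t - s) * k s)) \<le> integral {0..t} (\<lambda>s. norm (\<phi> (t - s)) * B)"
  proof (rule integral_norm_bound_integral[OF i1 i2])
    fix s assume s: "s \<in> {0..t}"
    then have "norm (k s) \<le> B" using B t by auto
    then show "norm (\<phi> (t - s) * k s) \<le> norm (\<phi> (t - s)) * B"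
      by (simp add: norm_mult mult_left_mono)
  qed
  also have "\<dots> = integral {0..t} (\<lambda>s. norm (\<phi> (t - s))) * B"
    using integral_mult[of "\<lambda>s. norm (\<phi> (t - s))" "{0..t}" B]
      integrable_continuous_real[OF continuous_on_norm[OF cont_refl[OF \<phi>c order_refl]]]
    by (simp add: mult.commute)
  also have "integral {0..t} (\<lambda>s. norm (\<phi> (t - s))) = integral {0..t} (\<lambda>s. norm (\<phi> s))"
    by (rule conv_reflect[where h="\<lambda>s. norm (\<phi> s)"])
  finally have "norm (integral {0..t} (\<lambda>s. \<phi> (t - s) * k s)) \<le> B * integral {0..t} (\<lambda>s. norm (\<phi> s))"
    by (simp add: mult.commute)
  moreover have "norm (\<phi> t) \<le> norm (a t) + norm (integral {0..t} (\<lambda>s. \<phi> (t - s) * k s))"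
    using eq[OF t] norm_triangle_ineq4 by metis
  ultimately show "norm (\<phi> t) \<le> A + B * integral {0..t} (\<lambda>t. norm (\<phi> t))"
    using A[OF t] by linarith
qed

lemma volterra_zero:
  fixes \<phi> k :: "real \<Rightarrow> complex"
  assumes \<phi>c: "continuous_on {0..} \<phi>" and kc: "continuous_on {0..} k"
    and eq: "\<And>t. t \<ge> 0 \<Longrightarrow> \<phi> t = - integral {0..t} (\<lambda>s. \<phi> (t - s) * k s)"
    and t: "t \<ge> 0"
  shows "\<phi> t = 0"
proof -
  obtain B where B: "B \<ge> 0" "\<And>s. s \<in> {0..t} \<Longrightarrow> norm (k s) \<le> B"
    using cont_bound[OF continuous_on_subset[OF kc], of 0 t] by auto
  have "norm (\<phi> t) \<le> 0 * exp (B * t)"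
    by (rule volterra_bound[OF \<phi>c kc _ _ B(2) B(1), where a="\<lambda>_. 0" and T=t]) (use eq t in auto)
  then show ?thesis by simp
qed

lemma avg_tendsto:
  fixes \<psi> :: "real \<Rightarrow> 'b::banach"
  assumes cont: "continuous_on {a..b} \<psi>" and ab: "a < b"
  shows "((\<lambda>h. (1/h) *\<^sub>R integral {a..a+h} \<psi>) \<longlongrightarrow> \<psi> a) (at_right 0)"
proof (rule tendstoI)
  fix e :: real assume e: "e > 0"
  have "continuous (at a within {a..b}) \<psi>" using cont ab
    by (simp add: continuous_on_eq_continuous_within)
  then obtain d where d: "d > 0" "\<And>s. s \<in> {a..b} \<Longrightarrow> dist s a < d \<Longrightarrow> dist (\<psi> s) (\<psi> a) < e/2"
    using e unfolding continuous_within_eps_delta by (metis half_gt_zero)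
  show "\<forall>\<^sub>F h in at_right 0. dist ((1/h) *\<^sub>R integral {a..a+h} \<psi>) (\<psi> a) < e"
    unfolding eventually_at_right_field
  proof (intro exI[of _ "min d (b - a)"] conjI allI impI)
    show "(0::real) < min d (b - a)" using d ab by simp
    fix h :: real assume h0: "0 < h" and h1: "h < min d (b - a)"
    have h: "0 < h \<and> h < min d (b - a)" using h0 h1 by simp
    then have sub: "{a..a+h} \<subseteq> {a..b}" by auto
    have int: "\<psi> integrable_on {a..a+h}"
      using integrable_continuous_real[OF continuous_on_subset[OF cont sub]] .
    have "integral {a..a+h} (\<lambda>s. \<psi> s - \<psi> a) = integral {a..a+h} \<psi> - h *\<^sub>R \<psi> a"
      using integral_diff[OF int integrable_const_ivl[of "\<psi> a" a "a+h"]] h by simp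
    then have eq: "(1/h) *\<^sub>R integral {a..a+h} \<psi> - \<psi> a = (1/h) *\<^sub>R integral {a..a+h} (\<lambda>s. \<psi> s - \<psi> a)"
      using h by (simp add: scaleR_diff_right)
    have hi: "((\<lambda>s. \<psi> s - \<psi> a) has_integral integral {a..a+h} (\<lambda>s. \<psi> s - \<psi> a)) {a..a+h}"
      using int by (intro integrable_integral integrable_diff) auto
    have bd: "norm (\<psi> s - \<psi> a) \<le> e/2" if s: "s \<in> {a..a+h} - {}" for s
    proof -
      have "dist (\<psi> s) (\<psi> a) < e/2" using d(2)[of s] sub h s by (auto simp: dist_real_def)
      then show ?thesis by (simp add: dist_norm)
    qed
    have "norm (integral {a..a+h} (\<lambda>s. \<psi> s - \<psi> a)) \<le> e/2 * h"
      using has_integral_bound_real[where S="{}", OF _ _ hi bd] e h by simp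
    then have "norm ((1/h) *\<^sub>R integral {a..a+h} (\<lambda>s. \<psi> s - \<psi> a)) \<le> e/2"
      using h by (simp add: field_simps)
    then have "norm ((1/h) *\<^sub>R integral {a..a+h} (\<lambda>s. \<psi> s - \<psi> a)) < e" using e by linarith
    then show "dist ((1/h) *\<^sub>R integral {a..a+h} \<psi>) (\<psi> a) < e"
      by (simp only: dist_norm eq)
  qed
qed

locale sg = hil +
  fixes U :: "real \<Rightarrow> 'a::banach \<Rightarrow> 'a"
  assumes semi: "strongly_cont_semigroup sc U"
begin

lemma U_bl: "t \<ge> 0 \<Longrightarrow> bounded_linear (U t)"
  and U_sc: "t \<ge> 0 \<Longrightarrow> U t (sc c x) = sc c (U t x)"
  and U0: "U 0 = id"
  and U_add: "s \<ge> 0 \<Longrightarrow> t \<ge> 0 \<Longrightarrow> U (s + t) x = U s (U t x)"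
  and U_right: "((\<lambda>t. U t x) \<longlongrightarrow> x) (at_right 0)"
  using semi unfolding strongly_cont_semigroup_def bounded_clin_def by auto

lemma U0x[simp]: "U 0 x = x" by (simp add: U0)

lemma U_diff: "t \<ge> 0 \<Longrightarrow> U t (x - y) = U t x - U t y"
  using U_bl linear_diff[OF bounded_linear.linear] by blast
lemma U_addx: "t \<ge> 0 \<Longrightarrow> U t (x + y) = U t x + U t y"
  using U_bl linear_add[OF bounded_linear.linear] by blast
lemma U_scaleR: "t \<ge> 0 \<Longrightarrow> U t (r *\<^sub>R x) = r *\<^sub>R U t x"
  using U_bl linear_scale[OF bounded_linear.linear] by blast
lemma U_zero[simp]: "t \<ge> 0 \<Longrightarrow> U t 0 = 0"
  using U_bl linear_0[OF bounded_linear.linear] by blast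

lemma U_small: "\<exists>d>0. \<forall>h. 0 \<le> h \<and> h < d \<longrightarrow> norm (U h x - x) < e" if "e > 0" for x e
proof -
  from tendstoD[OF U_right[of x] that] obtain d where "d > 0" "\<forall>h>0. h < d \<longrightarrow> dist (U h x) x < e"
    unfolding eventually_at_right_field by blast
  then show ?thesis using that by (intro exI[of _ d]) (auto simp: dist_norm le_less)
qed

lemma loc_bound: "\<exists>M \<delta>. \<delta> > 0 \<and> M \<ge> 0 \<and> (\<forall>t\<in>{0..\<delta>}. \<forall>x. norm (U t x) \<le> M * norm x)"
proof (rule ccontr)
  assume neg: "\<not> ?thesis"
  have "\<forall>n::nat. \<exists>t x. t \<in> {0..1/(real n+1)} \<and> norm (U t x) > real n * norm x"
  proof
    fix n :: nat
    have "1/(real n+1) > 0" "real n \<ge> 0" by auto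
    with neg have "\<not> (\<forall>t\<in>{0..1/(real n+1)}. \<forall>x. norm (U t x) \<le> real n * norm x)"
      by blast
    then show "\<exists>t x. t \<in> {0..1/(real n+1)} \<and> norm (U t x) > real n * norm x" by (auto simp: not_le)
  qed
  then have "\<exists>tt. \<forall>n. \<exists>x. tt n \<in> {0..1/(real n+1)} \<and> norm (U (tt n) x) > real n * norm x"
    by (rule choice)
  then obtain tt where "\<forall>n. \<exists>x. tt n \<in> {0..1/(real n+1)} \<and> norm (U (tt n) x) > real n * norm x"
    by blast
  then have "\<exists>xx. \<forall>n. tt n \<in> {0..1/(real n+1)} \<and> norm (U (tt n) (xx n)) > real n * norm (xx n)"
    by (rule choice)
  then obtain xx where txx0: "\<forall>n. tt n \<in> {0..1/(real n+1)} \<and> norm (U (tt n) (xx n)) > real n * norm (xx n)"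
    by blast
  have txx: "\<And>n. tt n \<in> {0..1/(real n+1)}" "\<And>n. norm (U (tt n) (xx n)) > real n * norm (xx n)"
    using txx0 by auto
  have tt0: "tt n \<ge> 0" for n using txx(1)[of n] by auto
  have ptw: "\<exists>m::nat. \<forall>n. norm (U (tt n) x) \<le> real m" for x
  proof -
    obtain d where d: "d > 0" "\<And>h. 0 \<le> h \<Longrightarrow> h < d \<Longrightarrow> norm (U h x - x) < 1"
      using U_small[of 1 x] by auto
    obtain N :: nat where N: "1 / d < real N" using reals_Archimedean2 by blast
    define B where "B = max (norm x + 1) (Max ((\<lambda>n. norm (U (tt n) x)) ` {..<N}))"
    have "norm (U (tt n) x) \<le> B" for n
    proof (cases "n < N")
      case True then show ?thesis unfolding B_def by (intro max.coboundedI2 Max_ge) auto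
    next
      case False
      have "1/d < real n + 1" using N False by linarith
      then have "1 < (real n + 1) * d" using d(1) by (simp add: pos_divide_less_eq)
      then have "1/(real n + 1) < d" by (simp add: pos_divide_less_eq mult.commute)
      then have "tt n < d" using txx(1)[of n] by auto
      then have "norm (U (tt n) x - x) < 1" using d tt0 by auto
      then have "norm (U (tt n) x) \<le> norm x + 1" using norm_triangle_sub[of "U (tt n) x" x] by linarith
      then show ?thesis unfolding B_def by simp
    qed
    moreover obtain m :: nat where "B \<le> real m" using real_arch_simple by blast
    ultimately show ?thesis by (meson order_trans)
  qed
  define E where "E m = {x. \<forall>n. norm (U (tt n) x) \<le> real m}" for m :: nat
  have closedE: "closed (E m)" for m
  proof -
    have "E m = (\<Inter>n. (\<lambda>x. norm (U (tt n) x)) -` {..real m})" unfolding E_def by auto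
    moreover have "closed ((\<lambda>x. norm (U (tt n) x)) -` {..real m})" for n
    proof -
      have "continuous (at x) (\<lambda>x. norm (U (tt n) x))" for x
        by (intro continuous_norm linear_continuous_at U_bl tt0)
      then show ?thesis by (intro continuous_closed_vimage closed_atMost)
    qed
    ultimately show ?thesis by (simp add: closed_INT)
  qed
  have unionE: "(\<Union>m. E m) = UNIV"
  proof (rule set_eqI)
    fix x
    obtain m where "\<forall>n. norm (U (tt n) x) \<le> real m" using ptw[of x] by blast
    then have "x \<in> E m" unfolding E_def by simp
    then show "x \<in> (\<Union>m. E m) \<longleftrightarrow> x \<in> UNIV" by blast
  qed
  have "\<exists>m. interior (E m) \<noteq> {}"
  proof (rule ccontr)
    assume "\<not> ?thesis"
    then have emp: "\<And>m. interior (E m) = {}" by blast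
    have "euclidean interior_of (\<Union>(range E)) = {}"
    proof (rule Baire_category_alt)
      show "completely_metrizable_space (euclidean::'a topology) \<or>
        locally_compact_space (euclidean::'a topology) \<and> regular_space (euclidean::'a topology)"
        using completely_metrizable_space_euclidean by blast
      show "countable (range E)" by simp
      fix T assume "T \<in> range E"
      then obtain m where T: "T = E m" by blast
      show "closedin euclidean T \<and> euclidean interior_of T = {}"
        unfolding T using closedE[of m] emp[of m] closed_closedin[of "E m"] euclidean_interior_of[of "E m"] by blast
    qed
    then have "interior (UNIV::'a set) = {}" unfolding euclidean_interior_of unionE .
    then show False by simp
  qed
  then obtain m x0 where "x0 \<in> interior (E m)" by blast
  then obtain \<epsilon> where eps: "\<epsilon> > 0" "ball x0 \<epsilon> \<subseteq> E m"
    using mem_interior by blast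
  have bnd: "norm (U (tt n) y) \<le> (4 * real m / \<epsilon>) * norm y" for n y
  proof (cases "y = 0")
    case True then show ?thesis using tt0 by simp
  next
    case False
    define y' where "y' = (\<epsilon> / (2 * norm y)) *\<^sub>R y"
    have ny': "norm y' = \<epsilon> / 2" using False eps by (simp add: y'_def)
    have "x0 + y' \<in> E m" using eps ny' by (intro subsetD[OF eps(2)]) (simp add: dist_norm)
    moreover have "x0 \<in> E m" using eps by auto
    ultimately have "norm (U (tt n) (x0 + y')) \<le> m" "norm (U (tt n) x0) \<le> m" unfolding E_def by auto
    moreover have "U (tt n) y' = U (tt n) (x0 + y') - U (tt n) x0" using tt0 by (simp add: U_addx)
    ultimately have "norm (U (tt n) y') \<le> 2 * m"
      using norm_triangle_ineq4[of "U (tt n) (x0 + y')" "U (tt n) x0"] by simp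
    then have "(\<epsilon> / (2 * norm y)) * norm (U (tt n) y) \<le> 2 * m"
      using tt0 eps by (simp add: y'_def U_scaleR)
    then show ?thesis using eps False by (simp add: field_simps)
  qed
  obtain n :: nat where n: "4 * real m / \<epsilon> < real n" using reals_Archimedean2 by blast
  have "real n * norm (xx n) < (4 * real m / \<epsilon>) * norm (xx n)"
    using txx(2)[of n] bnd[of n "xx n"] by linarith
  moreover have "(4 * real m / \<epsilon>) * norm (xx n) \<le> real n * norm (xx n)"
    using n by (intro mult_right_mono) auto
  ultimately show False by simp
qed

lemma bound_T: "\<exists>C. C \<ge> 1 \<and> (\<forall>t\<in>{0..T}. \<forall>x. norm (U t x) \<le> C * norm x)"
proof -
  obtain M \<delta> where M: "\<delta> > 0" "M \<ge> 0" "\<And>t x. t\<in>{0..\<delta>} \<Longrightarrow> norm (U t x) \<le> M * norm x"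
    using loc_bound by blast
  define M' where "M' = max 1 M"
  have M': "M' \<ge> 1" "\<And>t x. t\<in>{0..\<delta>} \<Longrightarrow> norm (U t x) \<le> M' * norm x"
    unfolding M'_def using M by (auto intro: order_trans[OF _ mult_right_mono[OF max.cobounded2 norm_ge_zero]])
  have ind: "\<forall>t\<in>{0..real n * \<delta>}. \<forall>x. norm (U t x) \<le> M' ^ n * norm x" for n
  proof (induction n)
    case 0 then show ?case by simp
  next
    case (Suc n)
    show ?case
    proof (intro ballI allI)
      fix t x assume t: "t \<in> {0..real (Suc n) * \<delta>}"
      show "norm (U t x) \<le> M' ^ Suc n * norm x"
      proof (cases "t \<le> \<delta>")
        case True
        then have "norm (U t x) \<le> M' * norm x" using M' t by auto
        also have "\<dots> \<le> M' ^ Suc n * norm x"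
          using M' by (intro mult_right_mono) (auto simp: power_increasing[of 1 "Suc n" M', simplified])
        finally show ?thesis .
      next
        case False
        then have t': "t - \<delta> \<in> {0..real n * \<delta>}" using t by (auto simp: algebra_simps)
        have "U t x = U \<delta> (U (t - \<delta>) x)" using U_add[of \<delta> "t - \<delta>" x] False M by simp
        then have "norm (U t x) \<le> M' * norm (U (t - \<delta>) x)" using M' M by auto
        also have "\<dots> \<le> M' * (M' ^ n * norm x)" using Suc t' M' by (intro mult_left_mono) auto
        finally show ?thesis by simp
      qed
    qed
  qed
  obtain n :: nat where n: "T / \<delta> \<le> real n" using real_arch_simple by blast
  have "T \<le> real n * \<delta>" using n M by (simp add: field_simps)
  then show ?thesis using ind[of n] M' by (intro exI[of _ "M' ^ n"]) auto
qed

lemma U_cont: "continuous_on {0..} (\<lambda>t. U t v)"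
  unfolding continuous_on_iff
proof (intro ballI allI impI)
  fix t0 e :: real assume t0: "t0 \<in> {0..}" and e: "e > 0"
  obtain C where C: "C \<ge> 1" "\<And>t x. t\<in>{0..t0+1} \<Longrightarrow> norm (U t x) \<le> C * norm x"
    using bound_T[of "t0+1"] by blast
  obtain d0 where d0: "d0 > 0" "\<And>h. 0 \<le> h \<Longrightarrow> h < d0 \<Longrightarrow> norm (U h v - v) < e / C"
    using U_small[of "e/C" v] e C by auto
  show "\<exists>d>0. \<forall>t\<in>{0..}. dist t t0 < d \<longrightarrow> dist (U t v) (U t0 v) < e"
  proof (intro exI[of _ "min d0 1"] conjI ballI impI)
    show "0 < min d0 1" using d0 by simp
    fix t :: real assume t: "t \<in> {0..}" "dist t t0 < min d0 1"
    show "dist (U t v) (U t0 v) < e"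
    proof (cases "t0 \<le> t")
      case True
      have eq: "U t v - U t0 v = U t0 (U (t - t0) v - v)"
        using U_add[of t0 "t - t0" v] True t0 by (simp add: U_diff)
      have "norm (U t0 (U (t - t0) v - v)) \<le> C * norm (U (t - t0) v - v)" using C t0 by auto
      also have "\<dots> < C * (e / C)" using C d0 True t by (intro mult_strict_left_mono) (auto simp: dist_real_def)
      finally show ?thesis using C by (simp add: dist_norm eq)
    next
      case False
      have eq: "U t v - U t0 v = U t (v - U (t0 - t) v)"
        using U_add[of t "t0 - t" v] False t by (simp add: U_diff)
      have "norm (U t (v - U (t0 - t) v)) \<le> C * norm (v - U (t0 - t) v)" using C t False by auto
      also have "\<dots> < C * (e / C)" using C d0 False t
        by (intro mult_strict_left_mono) (auto simp: dist_real_def norm_minus_commute)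
      finally show ?thesis using C by (simp add: dist_norm eq)
    qed
  qed
qed

lemma U_cont_on: "S \<subseteq> {0..} \<Longrightarrow> continuous_on S (\<lambda>t. U t v)"
  using continuous_on_subset[OF U_cont] .

lemma U_int: "0 \<le> a \<Longrightarrow> (\<lambda>t. U t v) integrable_on {a..b}"
  by (intro integrable_continuous_real U_cont_on) auto

definition Vi where "Vi t y = integral {0..t} (\<lambda>s. U s y)"

lemma UV: assumes "h \<ge> 0" "t \<ge> 0" shows "U h (Vi t y) = integral {h..t+h} (\<lambda>s. U s y)"
proof -
  have int: "(\<lambda>s. U s y) integrable_on {0..t}" using U_int by simp
  have "U h (Vi t y) = integral {0..t} (\<lambda>s. U h (U s y))"
    unfolding Vi_def using integral_linear[OF int U_bl[OF assms(1)]] by (simp add: o_def)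
  also have "\<dots> = integral {0..t} (\<lambda>s. U (s + h) y)"
  proof (intro integral_cong)
    fix s assume "s \<in> {0..t}"
    then show "U h (U s y) = U (s + h) y" using U_add[of h s y] assms by (simp add: add.commute)
  qed
  also have "\<dots> = integral {h..t+h} (\<lambda>s. U s y)"
  proof -
    have "integral {h-h..(t+h)-h} (\<lambda>x. U (x + h) y) = integral {h..t+h} (\<lambda>s. U s y)"
      by (rule integral_shift_real_ivl)
    then show ?thesis by simp
  qed
  finally show ?thesis .
qed

lemma V_gen: assumes t: "t \<ge> 0"
  shows "((\<lambda>h. (1 / h) *\<^sub>R (U h (Vi t y) - Vi t y)) \<longlongrightarrow> U t y - y) (at_right 0)"
proof (cases "t = 0")
  case True
  have "\<forall>\<^sub>F h in at_right 0. (1 / h) *\<^sub>R (U h (Vi t y) - Vi t y) = U t y - y"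
    unfolding eventually_at_right_field using True by (intro exI[of _ 1]) (auto simp: Vi_def)
  then show ?thesis by (rule tendsto_eventually)
next
  case False
  then have t: "t > 0" using t by simp
  have A: "((\<lambda>h. (1/h) *\<^sub>R integral {t..t+h} (\<lambda>s. U s y)) \<longlongrightarrow> U t y) (at_right 0)"
    by (rule avg_tendsto[of t "t+1"]) (use t in \<open>auto intro: U_cont_on\<close>)
  have B: "((\<lambda>h. (1/h) *\<^sub>R integral {0..0+h} (\<lambda>s. U s y)) \<longlongrightarrow> U 0 y) (at_right 0)"
    by (rule avg_tendsto[of 0 1]) (auto intro: U_cont_on)
  have lim: "((\<lambda>h. (1/h) *\<^sub>R integral {t..t+h} (\<lambda>s. U s y) - (1/h) *\<^sub>R integral {0..0+h} (\<lambda>s. U s y))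
     \<longlongrightarrow> U t y - y) (at_right 0)"
    using tendsto_diff[OF A B] by simp
  have ev: "\<forall>\<^sub>F h in at_right 0. (1/h) *\<^sub>R integral {t..t+h} (\<lambda>s. U s y) - (1/h) *\<^sub>R integral {0..0+h} (\<lambda>s. U s y)
       = (1 / h) *\<^sub>R (U h (Vi t y) - Vi t y)"
    unfolding eventually_at_right_field
  proof (intro exI[of _ t] conjI allI impI)
    show "(0::real) < t" using t .
    fix h :: real assume h0: "0 < h" and h1: "h < t"
    have h: "0 < h \<and> h < t" using h0 h1 by simp
    have c1: "integral {0..h} (\<lambda>s. U s y) + integral {h..t} (\<lambda>s. U s y) = Vi t y"
      unfolding Vi_def using h by (intro hk_combine U_int) auto
    have c2: "integral {h..t} (\<lambda>s. U s y) + integral {t..t+h} (\<lambda>s. U s y) = integral {h..t+h} (\<lambda>s. U s y)"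
      using h by (intro hk_combine U_int) auto
    have "U h (Vi t y) - Vi t y = (integral {h..t} (\<lambda>s. U s y) + integral {t..t+h} (\<lambda>s. U s y))
       - (integral {0..h} (\<lambda>s. U s y) + integral {h..t} (\<lambda>s. U s y))"
    proof -
      have uv: "U h (Vi t y) = integral {h..t+h} (\<lambda>s. U s y)" using UV h t by simp
      show ?thesis by (subst uv, subst c2[symmetric], subst c1[symmetric], rule refl)
    qed
    also have "\<dots> = integral {t..t+h} (\<lambda>s. U s y) - integral {0..h} (\<lambda>s. U s y)"
      by simp
    finally have "U h (Vi t y) - Vi t y = integral {t..t+h} (\<lambda>s. U s y) - integral {0..h} (\<lambda>s. U s y)" .
    then show "(1/h) *\<^sub>R integral {t..t+h} (\<lambda>s. U s y) - (1/h) *\<^sub>R integral {0..0+h} (\<lambda>s. U s y)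
       = (1 / h) *\<^sub>R (U h (Vi t y) - Vi t y)" by (simp add: scaleR_diff_right)
  qed
  show ?thesis using lim tendsto_cong[OF ev] by blast
qed

lemma V_dom: "t \<ge> 0 \<Longrightarrow> Vi t y \<in> gen_dom U"
  unfolding gen_dom_def using V_gen by blast

lemma V_genU: "t \<ge> 0 \<Longrightarrow> gen U (Vi t y) = U t y - y"
  unfolding gen_def using V_gen by (intro tendsto_Lim) auto

lemma V_dense: "((\<lambda>h. (1/h) *\<^sub>R Vi h v) \<longlongrightarrow> v) (at_right 0)"
  using avg_tendsto[of 0 1 "\<lambda>s. U s v"] U_cont_on[of "{0..1}" v] by (simp add: Vi_def)

end

locale adjz = sg +
  fixes z Ldz :: 'a
  assumes zdom: "z \<in> adj_dom ip (gen_dom U) (gen U)"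
    and Ldz_eq: "Ldz = adj ip (gen_dom U) (gen U) z"
begin

lemma ip_dense_zero: assumes "\<And>x. x \<in> gen_dom U \<Longrightarrow> ip x d = 0" shows "d = 0"
proof -
  have lim: "((\<lambda>h. ip ((1/h) *\<^sub>R Vi h d) d) \<longlongrightarrow> ip d d) (at_right 0)"
    by (intro tendsto_ip V_dense tendsto_const)
  have ev: "\<forall>\<^sub>F h in at_right 0. ip ((1/h) *\<^sub>R Vi h d) d = 0"
    unfolding eventually_at_right_field
  proof (intro exI[of _ 1] conjI allI impI)
    fix h :: real assume "0 < h" "h < 1"
    then have "ip (Vi h d) d = 0" using assms V_dom by simp
    then show "ip ((1/h) *\<^sub>R Vi h d) d = 0" by (simp add: ip_scaleR_left)
  qed simp
  have "ip d d = 0"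
    using tendsto_unique[OF trivial_limit_at_right_real lim tendsto_eventually[OF ev]] .
  then show ?thesis by (simp add: ip_self_eq_0)
qed

lemma adj_prop: "x \<in> gen_dom U \<Longrightarrow> ip (gen U x) z = ip x Ldz"
proof -
  obtain w0 where w0: "\<forall>x\<in>gen_dom U. ip (gen U x) z = ip x w0"
    using zdom unfolding adj_dom_def by blast
  have "Ldz = w0" unfolding Ldz_eq adj_def
  proof (rule the_equality)
    show "\<forall>x\<in>gen_dom U. ip (gen U x) z = ip x w0" by (rule w0)
    fix w assume hw: "\<forall>x\<in>gen_dom U. ip (gen U x) z = ip x w"
    have "w - w0 = 0"
      by (rule ip_dense_zero) (use hw w0 in \<open>simp add: ip_diff_right\<close>)
    then show "w = w0" by simp
  qed
  then show "x \<in> gen_dom U \<Longrightarrow> ip (gen U x) z = ip x Ldz" using w0 by simp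
qed

lemma weak: assumes t: "t \<ge> 0"
  shows "ip (U t y) z = ip y z + integral {0..t} (\<lambda>s. ip (U s y) Ldz)"
proof -
  have "ip (U t y - y) z = ip (gen U (Vi t y)) z" using V_genU[OF t] by simp
  also have "\<dots> = ip (Vi t y) Ldz" using adj_prop V_dom[OF t] by blast
  also have "\<dots> = integral {0..t} (\<lambda>s. ip (U s y) Ldz)"
    unfolding Vi_def using integral_linear[OF U_int[of 0 y t] ip_bl_left[of Ldz]] by (simp add: o_def)
  finally show ?thesis by (simp add: ip_diff_left algebra_simps)
qed

end

locale main = adjz +
  fixes P Q :: "'a \<Rightarrow> 'a" and f :: "'a \<Rightarrow> real \<Rightarrow> complex"
  assumes znz: "z \<noteq> 0"
    and P_def: "\<And>x. P x = sc (ip x z / ip z z) z"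
    and Q_def: "\<And>x. Q x = x - P x"
    and f_cont: "\<And>x. continuous_on {0..} (f x)"
    and f_eq: "\<And>x t. 0 \<le> t \<Longrightarrow>
       f x t = ip (U t (Q x)) (Q Ldz) / ip z z
             - integral {0..t} (\<lambda>s. f x (t - s) * (ip (U s z) (Q Ldz) / ip z z))"
begin

lemma cnz: "ip z z \<noteq> 0" using znz by (simp add: ip_self_eq_0)

definition kk where "kk s = ip (U s z) (Q Ldz) / ip z z"
definition aa where "aa x t = ip (U t (Q x)) (Q Ldz) / ip z z"

lemma f_eq': "0 \<le> t \<Longrightarrow> f x t = aa x t - integral {0..t} (\<lambda>s. f x (t - s) * kk s)"
  using f_eq unfolding aa_def kk_def by blast

lemma P_add: "P (x + y) = P x + P y"
  by (simp add: P_def ip_add_left add_divide_distrib sc_add_left)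

lemma P_sc: "P (sc a x) = sc a (P x)"
  by (simp add: P_def ip_sc_left sc_mult[symmetric])

lemma P_scaleR: "P (r *\<^sub>R x) = r *\<^sub>R P x"
  using P_sc[of "complex_of_real r" x] by (simp add: sc_real)

lemma Q_add: "Q (x + y) = Q x + Q y"
  by (simp add: Q_def P_add)

lemma Q_sc: "Q (sc a x) = sc a (Q x)"
  by (simp add: Q_def P_sc sc_diff_right)

lemma P_bl: "bounded_linear P"
proof -
  have "bounded_linear (\<lambda>x. sc (ip x z / ip z z) z)"
    by (rule bounded_linear_compose[OF sc_bl_left bounded_linear_compose[OF bounded_linear_divide ip_bl_left]])
  then show ?thesis by (simp add: P_def[abs_def])
qed

lemma Q_bl: "bounded_linear Q"
  unfolding Q_def[abs_def] by (intro bounded_linear_sub bounded_linear_ident P_bl)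

lemma ip_Q_z: "ip (Q x) z = 0"
  using cnz by (simp add: Q_def P_def ip_diff_left ip_sc_left)

lemma P_z_mult: "P (sc a z) = sc a z"
  using cnz by (simp add: P_def ip_sc_left)

lemma P_P: "P (P x) = P x"
  by (simp add: P_def[of x] P_z_mult)

lemma norm_P: "norm (P x) \<le> norm x"
proof -
  have "norm (P x) = norm (ip x z) / norm (ip z z) * norm z"
    by (simp add: P_def norm_sc norm_divide)
  also have "\<dots> = norm (ip x z) / norm z"
    using znz by (simp add: ip_self_norm power2_eq_square)
  also have "\<dots> \<le> norm x * norm z / norm z"
    by (intro divide_right_mono ip_cs) simp
  also have "\<dots> = norm x" using znz by simp
  finally show ?thesis .
qed

lemma norm_Q: "norm (Q x) \<le> 2 * norm x"
  using norm_P[of x] norm_triangle_ineq4[of x "P x"] by (simp add: Q_def)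

lemma kk_cont: "continuous_on {0..} kk"
  unfolding kk_def by (intro continuous_intros U_cont) (use cnz in auto)

lemma aa_cont: "continuous_on {0..} (aa x)"
  unfolding aa_def by (intro continuous_intros U_cont) (use cnz in auto)

lemma aa_add: "t \<ge> 0 \<Longrightarrow> aa (x + y) t = aa x t + aa y t"
  by (simp add: aa_def Q_add U_addx ip_add_left add_divide_distrib)

lemma aa_sc: "t \<ge> 0 \<Longrightarrow> aa (sc a x) t = a * aa x t"
  by (simp add: aa_def Q_sc U_sc ip_sc_left)

lemma f_add: assumes t: "t \<ge> 0" shows "f (x + y) t = f x t + f y t"
proof -
  let ?d = "\<lambda>t. f (x + y) t - f x t - f y t"
  have "?d t = 0"
  proof (rule volterra_zero[OF _ kk_cont _ t])
    show "continuous_on {0..} ?d" by (intro continuous_intros f_cont)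
    fix t :: real assume t: "t \<ge> 0"
    have i: "\<And>v. (\<lambda>s. f v (t - s) * kk s) integrable_on {0..t}" by (rule conv_int[OF f_cont kk_cont])
    have "integral {0..t} (\<lambda>s. ?d (t - s) * kk s) = integral {0..t} (\<lambda>s. f (x + y) (t - s) * kk s - f x (t - s) * kk s - f y (t - s) * kk s)"
      by (rule integral_cong) (simp add: algebra_simps)
    also have "\<dots> = integral {0..t} (\<lambda>s. f (x + y) (t - s) * kk s) - integral {0..t} (\<lambda>s. f x (t - s) * kk s) - integral {0..t} (\<lambda>s. f y (t - s) * kk s)"
      by (simp add: integral_diff i integrable_diff)
    finally have eqd: "integral {0..t} (\<lambda>s. ?d (t - s) * kk s) = integral {0..t} (\<lambda>s. f (x + y) (t - s) * kk s) - integral {0..t} (\<lambda>s. f x (t - s) * kk s) - integral {0..t} (\<lambda>s. f y (t - s) * kk s)" .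
    show "?d t = - integral {0..t} (\<lambda>s. ?d (t - s) * kk s)"
      unfolding eqd f_eq'[OF t, of "x + y"] f_eq'[OF t, of x] f_eq'[OF t, of y] aa_add[OF t, of x y]
      by (simp add: algebra_simps)
  qed
  then show ?thesis by (simp add: algebra_simps)
qed

lemma f_sc: assumes t: "t \<ge> 0" shows "f (sc a x) t = a * f x t"
proof -
  let ?d = "\<lambda>t. f (sc a x) t - a * f x t"
  have "?d t = 0"
  proof (rule volterra_zero[OF _ kk_cont _ t])
    show "continuous_on {0..} ?d" by (intro continuous_intros f_cont)
    fix t :: real assume t: "t \<ge> 0"
    have i: "\<And>v. (\<lambda>s. f v (t - s) * kk s) integrable_on {0..t}" by (rule conv_int[OF f_cont kk_cont])
    have "integral {0..t} (\<lambda>s. ?d (t - s) * kk s) = integral {0..t} (\<lambda>s. f (sc a x) (t - s) * kk s - a * (f x (t - s) * kk s))"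
      by (rule integral_cong) (simp add: algebra_simps)
    also have "\<dots> = integral {0..t} (\<lambda>s. f (sc a x) (t - s) * kk s) - a * integral {0..t} (\<lambda>s. f x (t - s) * kk s)"
      using i by (simp add: integral_diff integral_cmult integrable_on_mult_right)
    finally have eqd: "integral {0..t} (\<lambda>s. ?d (t - s) * kk s) = integral {0..t} (\<lambda>s. f (sc a x) (t - s) * kk s) - a * integral {0..t} (\<lambda>s. f x (t - s) * kk s)" .
    show "?d t = - integral {0..t} (\<lambda>s. ?d (t - s) * kk s)"
      unfolding eqd f_eq'[OF t, of "sc a x"] f_eq'[OF t, of x] aa_sc[OF t, of a x]
      by (simp add: algebra_simps)
  qed
  then show ?thesis by simp
qed

lemma f_bound: "\<exists>M\<ge>0. \<forall>x. \<forall>t\<in>{0..T}. norm (f x t) \<le> M * norm x"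
proof -
  obtain C where C: "C \<ge> 1" "\<And>t x. t\<in>{0..T} \<Longrightarrow> norm (U t x) \<le> C * norm x"
    using bound_T[of T] by blast
  obtain B where B: "B \<ge> 0" "\<And>s. s \<in> {0..T} \<Longrightarrow> norm (kk s) \<le> B"
    using cont_bound[OF continuous_on_subset[OF kk_cont], of 0 T] by auto
  define A where "A = C * 2 * norm (Q Ldz) / norm (ip z z)"
  have A0: "A \<ge> 0" using C unfolding A_def by simp
  have aab: "norm (aa x t) \<le> A * norm x" if t: "t \<in> {0..T}" for x t
  proof -
    have "norm (aa x t) \<le> norm (U t (Q x)) * norm (Q Ldz) / norm (ip z z)"
      unfolding aa_def norm_divide by (intro divide_right_mono ip_cs) simp
    also have "\<dots> \<le> (C * (2 * norm x)) * norm (Q Ldz) / norm (ip z z)"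
      by (intro divide_right_mono mult_right_mono order_trans[OF C(2)[OF t] mult_left_mono[OF norm_Q]]) (use C in auto)
    finally show ?thesis by (simp add: A_def algebra_simps)
  qed
  have "norm (f x t) \<le> (A * norm x) * exp (B * t)" if t: "t \<in> {0..T}" for x t
    by (rule volterra_bound[OF f_cont kk_cont f_eq' aab B(2) B(1) t]) auto
  moreover have "exp (B * t) \<le> exp (B * T)" if "t \<in> {0..T}" for t
    using that B by (simp add: mult_left_mono)
  ultimately have "norm (f x t) \<le> (A * exp (B * T)) * norm x" if "t \<in> {0..T}" for x t
    using that A0 by (smt (verit, best) mult.commute mult.left_commute mult_left_mono norm_ge_zero zero_le_mult_iff)
  then show ?thesis using A0 by (intro exI[of _ "A * exp (B * T)"]) auto
qed

end

context main begin

definition Iv where "Iv x t = integral {0..t} (\<lambda>s. sc (f x (t - s)) (U s z))"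
definition G where "G t x = P x + U t (Q x) - Iv x t"

lemma cv_cont: "continuous_on {0..t} (\<lambda>s. sc (f x (t - s)) (U s z))"
  by (intro continuous_on_sc cont_refl f_cont U_cont_on) auto

lemma cv_int: "(\<lambda>s. sc (f x (t - s)) (U s z)) integrable_on {0..t}"
  by (rule integrable_continuous_real[OF cv_cont])

lemma Iv_add: "t \<ge> 0 \<Longrightarrow> Iv (x + y) t = Iv x t + Iv y t"
proof -
  assume t: "t \<ge> 0"
  have "Iv (x + y) t = integral {0..t} (\<lambda>s. sc (f x (t - s)) (U s z) + sc (f y (t - s)) (U s z))"
    unfolding Iv_def by (rule integral_cong) (use t in \<open>auto simp: f_add sc_add_left\<close>)
  also have "\<dots> = Iv x t + Iv y t" unfolding Iv_def by (rule integral_add[OF cv_int cv_int])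
  finally show ?thesis .
qed

lemma Iv_sc: "t \<ge> 0 \<Longrightarrow> Iv (sc a x) t = sc a (Iv x t)"
proof -
  assume t: "t \<ge> 0"
  have "Iv (sc a x) t = integral {0..t} (\<lambda>s. sc a (sc (f x (t - s)) (U s z)))"
    unfolding Iv_def by (rule integral_cong) (use t in \<open>auto simp: f_sc sc_mult\<close>)
  also have "\<dots> = sc a (Iv x t)"
    unfolding Iv_def using integral_linear[OF cv_int sc_bl_right[of a]] by (simp add: o_def)
  finally show ?thesis .
qed

lemma Iv_bound: "\<exists>K\<ge>0. \<forall>x. \<forall>t\<in>{0..T}. norm (Iv x t) \<le> t * K * norm x"
proof -
  obtain M where M: "M \<ge> 0" "\<And>x t. t\<in>{0..T} \<Longrightarrow> norm (f x t) \<le> M * norm x"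
    using f_bound[of T] by blast
  obtain C where C: "C \<ge> 1" "\<And>t x. t\<in>{0..T} \<Longrightarrow> norm (U t x) \<le> C * norm x"
    using bound_T[of T] by blast
  have "norm (Iv x t) \<le> t * (M * C * norm z) * norm x" if t: "t \<in> {0..T}" for x t
  proof -
    have "norm (Iv x t) \<le> integral {0..t} (\<lambda>s. M * norm x * (C * norm z))"
      unfolding Iv_def
    proof (rule integral_norm_bound_integral[OF cv_int])
      fix s assume s: "s \<in> {0..t}"
      have "norm (sc (f x (t - s)) (U s z)) = norm (f x (t - s)) * norm (U s z)" by (rule norm_sc)
      also have "\<dots> \<le> M * norm x * (C * norm z)"
        by (intro mult_mono M(2) C(2)) (use s t M in auto)
      finally show "norm (sc (f x (t - s)) (U s z)) \<le> M * norm x * (C * norm z)" .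
    qed auto
    also have "\<dots> = t * (M * C * norm z) * norm x" using t by simp
    finally show ?thesis .
  qed
  then show ?thesis using M C by (intro exI[of _ "M * C * norm z"]) auto
qed

lemma G_add: "t \<ge> 0 \<Longrightarrow> G t (x + y) = G t x + G t y"
  by (simp add: G_def P_add Q_add U_addx Iv_add algebra_simps)

lemma G_sc: "t \<ge> 0 \<Longrightarrow> G t (sc a x) = sc a (G t x)"
  by (simp add: G_def P_sc Q_sc U_sc Iv_sc sc_add_right sc_diff_right)

lemma G_bl: assumes t: "t \<ge> 0" shows "bounded_linear (G t)"
proof -
  obtain K where K: "K \<ge> 0" "\<And>x s. s\<in>{0..t} \<Longrightarrow> norm (Iv x s) \<le> s * K * norm x"
    using Iv_bound[of t] by blast
  obtain C where C: "C \<ge> 1" "\<And>s x. s\<in>{0..t} \<Longrightarrow> norm (U s x) \<le> C * norm x"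
    using bound_T[of t] by blast
  show ?thesis
  proof (rule bounded_linear_intro[where K="1 + 2 * C + t * K"])
    show "G t (x + y) = G t x + G t y" for x y by (rule G_add[OF t])
    show "G t (r *\<^sub>R x) = r *\<^sub>R G t x" for r x
      using G_sc[OF t, of "complex_of_real r" x] by (simp add: sc_real)
    show "norm (G t x) \<le> norm x * (1 + 2 * C + t * K)" for x
    proof -
      have "norm (G t x) \<le> norm (P x) + norm (U t (Q x)) + norm (Iv x t)"
        unfolding G_def by (rule order_trans[OF norm_triangle_ineq4 add_right_mono[OF norm_triangle_ineq]])
      also have "\<dots> \<le> norm x + C * (2 * norm x) + t * K * norm x"
        by (intro add_mono norm_P order_trans[OF C(2)] mult_left_mono norm_Q K(2)) (use t C in auto)
      finally show ?thesis by (simp add: algebra_simps)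
    qed
  qed
qed

lemma G_clin: "t \<ge> 0 \<Longrightarrow> bounded_clin sc (G t)"
  unfolding bounded_clin_def using G_bl G_sc by blast

lemma G0: "G 0 = id"
proof
  fix x show "G 0 x = id x" by (simp add: G_def Iv_def Q_def)
qed

lemma G_right: "((\<lambda>t. G t x) \<longlongrightarrow> x) (at_right 0)"
proof -
  obtain K where K: "K \<ge> 0" "\<And>x s. s\<in>{0..1} \<Longrightarrow> norm (Iv x s) \<le> s * K * norm x"
    using Iv_bound[of 1] by blast
  have "((\<lambda>t. Iv x t) \<longlongrightarrow> 0) (at_right 0)"
  proof (rule Lim_null_comparison)
    show "\<forall>\<^sub>F t in at_right 0. norm (Iv x t) \<le> t * K * norm x"
      unfolding eventually_at_right_field by (intro exI[of _ 1]) (auto intro: K(2))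
    have "((\<lambda>t. t * K * norm x) \<longlongrightarrow> 0 * K * norm x) (at_right 0)"
      by (intro tendsto_intros)
    then show "((\<lambda>t. t * K * norm x) \<longlongrightarrow> 0) (at_right 0)" by simp
  qed
  then have "((\<lambda>t. P x + U t (Q x) - Iv x t) \<longlongrightarrow> P x + Q x - 0) (at_right 0)"
    by (intro tendsto_intros U_right)
  then show ?thesis by (simp add: G_def Q_def)
qed

end

lemma cont_all_T:
  fixes h :: "real \<Rightarrow> 'b::topological_space"
  assumes "\<And>T. continuous_on {0..T} h"
  shows "continuous_on {0..} h"
  unfolding continuous_on_eq_continuous_within
proof
  fix x :: real assume x: "x \<in> {0..}"
  have "continuous (at x within {0..x+1}) h"
    using assms[of "x+1"] x by (simp add: continuous_on_eq_continuous_within)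
  moreover have "at x within {0..} = at x within {0..x+1}"
    by (rule at_within_nhd[where S="{..<x+1}"]) auto
  ultimately show "continuous (at x within {0..}) h" by (simp add: continuous_within)
qed

context main begin

lemma ip_Iv: "ip (Iv x t) v = integral {0..t} (\<lambda>s. f x (t - s) * ip (U s z) v)"
  unfolding Iv_def using integral_linear[OF cv_int ip_bl_left[of v]] by (simp add: o_def ip_sc_left)

lemma conv_ip_cont: "continuous_on {0..} (\<lambda>t. integral {0..t} (\<lambda>s. f x (t - s) * ip (U s z) v))"
  by (intro cont_all_T conv_cont f_cont continuous_intros U_cont)

lemma invariance: assumes t: "t \<ge> 0" shows "ip (U t (Q x) - Iv x t) z = 0"
proof -
  define g where "g t = ip (U t (Q x) - Iv x t) z" for t
  define \<beta> where "\<beta> = ip Ldz z / ip z z"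
  define k' where "k' s = ip (U s z) Ldz" for s
  have k'c: "continuous_on {0..} k'" unfolding k'_def by (intro continuous_intros U_cont)
  have g_eq: "g t = ip (U t (Q x)) z - integral {0..t} (\<lambda>s. f x (t - s) * ip (U s z) z)" for t
    by (simp add: g_def ip_diff_left ip_Iv)
  have gc: "continuous_on {0..} g"
    unfolding g_eq[abs_def] by (intro continuous_intros U_cont conv_ip_cont)
  have key: "g t = cnj \<beta> * integral {0..t} g" if t: "t \<ge> 0" for t
  proof -
    have i_a1: "(\<lambda>s. ip (U s (Q x)) Ldz) integrable_on {0..t}"
      by (intro integrable_continuous_real continuous_intros U_cont_on) auto
    have i_f: "f x integrable_on {0..t}"
      by (intro integrable_continuous_real continuous_on_subset[OF f_cont]) auto
    have i_cf: "(\<lambda>s. ip z z * f x s) integrable_on {0..t}"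
      by (intro integrable_continuous_real continuous_intros continuous_on_subset[OF f_cont]) auto
    have i_cv: "(\<lambda>u. integral {0..u} (\<lambda>\<sigma>. f x (u - \<sigma>) * k' \<sigma>)) integrable_on {0..t}"
      by (intro integrable_continuous_real conv_cont f_cont k'c)
    have i_g: "g integrable_on {0..t}"
      by (intro integrable_continuous_real continuous_on_subset[OF gc]) auto
    have w1: "ip (U t (Q x)) z = integral {0..t} (\<lambda>s. ip (U s (Q x)) Ldz)"
      using weak[OF t, of "Q x"] by (simp add: ip_Q_z)
    have w2: "ip (U s z) z = ip z z + integral {0..s} k'" if "s \<ge> 0" for s
      using weak[OF that, of z] unfolding k'_def[abs_def] by simp
    have "integral {0..t} (\<lambda>s. f x (t - s) * ip (U s z) z)
        = integral {0..t} (\<lambda>s. ip z z * f x (t - s) + f x (t - s) * integral {0..s} k')"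
      by (rule integral_cong) (simp add: w2 algebra_simps)
    also have "\<dots> = ip z z * integral {0..t} (\<lambda>s. f x (t - s)) + integral {0..t} (\<lambda>s. f x (t - s) * integral {0..s} k')"
    proof -
      have i1: "(\<lambda>s. f x (t - s)) integrable_on {0..t}"
        by (intro integrable_continuous_real cont_refl f_cont) auto
      have i1': "(\<lambda>s. ip z z * f x (t - s)) integrable_on {0..t}"
        by (intro integrable_continuous_real continuous_intros cont_refl f_cont) auto
      have i2: "(\<lambda>s. f x (t - s) * integral {0..s} k') integrable_on {0..t}"
        by (intro integrable_continuous_real continuous_intros cont_refl f_cont
            indefinite_integral_continuous_1 integrable_continuous_real continuous_on_subset[OF k'c]) auto
      show ?thesis by (simp add: integral_add[OF i1' i2] integral_cmult[OF i1])
    qed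
    also have "integral {0..t} (\<lambda>s. f x (t - s)) = integral {0..t} (f x)" by (rule conv_reflect)
    also have "integral {0..t} (\<lambda>s. f x (t - s) * integral {0..s} k') =
        integral {0..t} (\<lambda>u. integral {0..u} (\<lambda>\<sigma>. f x (u - \<sigma>) * k' \<sigma>))"
      by (rule assoc[OF f_cont k'c t])
    finally have e2: "integral {0..t} (\<lambda>s. f x (t - s) * ip (U s z) z) =
        integral {0..t} (\<lambda>s. ip z z * f x s) + integral {0..t} (\<lambda>u. integral {0..u} (\<lambda>\<sigma>. f x (u - \<sigma>) * k' \<sigma>))"
      using integral_cmult[OF i_f, of "ip z z"] by simp
    have "g t = integral {0..t} (\<lambda>u. ip (U u (Q x)) Ldz - ip z z * f x u - integral {0..u} (\<lambda>\<sigma>. f x (u - \<sigma>) * k' \<sigma>))"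
      unfolding g_eq w1 e2
      by (simp add: integral_diff[OF integrable_diff[OF i_a1 i_cf] i_cv] integral_diff[OF i_a1 i_cf])
    also have "\<dots> = integral {0..t} (\<lambda>u. cnj \<beta> * g u)"
    proof (rule integral_cong)
      fix u assume u: "u \<in> {0..t}"
      then have u0: "u \<ge> 0" by simp
      have r1: "ip (U u (Q x) - Iv x u) Ldz = ip (U u (Q x)) Ldz - integral {0..u} (\<lambda>\<sigma>. f x (u - \<sigma>) * k' \<sigma>)"
        by (simp add: ip_diff_left ip_Iv k'_def)
      have "ip z z * f x u = ip z z * (ip (U u (Q x)) (Q Ldz) / ip z z
          - integral {0..u} (\<lambda>s. f x (u - s) * (ip (U s z) (Q Ldz) / ip z z)))"
        using f_eq[OF u0, of x] by simp
      also have "integral {0..u} (\<lambda>s. f x (u - s) * (ip (U s z) (Q Ldz) / ip z z))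
          = integral {0..u} (\<lambda>s. f x (u - s) * ip (U s z) (Q Ldz)) / ip z z"
      proof -
        have ic: "(\<lambda>s. f x (u - s) * ip (U s z) (Q Ldz)) integrable_on {0..u}"
          by (rule conv_int[OF f_cont]) (intro continuous_intros U_cont)
        show ?thesis using integral_multc[OF ic, of "inverse (ip z z)"]
          by (simp add: divide_inverse mult.assoc)
      qed
      finally have "ip z z * f x u = ip (U u (Q x)) (Q Ldz) - integral {0..u} (\<lambda>s. f x (u - s) * ip (U s z) (Q Ldz))"
        using cnz by (simp add: right_diff_distrib)
      also have "\<dots> = ip (U u (Q x) - Iv x u) (Q Ldz)" by (simp add: ip_diff_left ip_Iv)
      finally have r2: "ip z z * f x u = ip (U u (Q x) - Iv x u) (Q Ldz)" .
      have "Ldz - Q Ldz = sc \<beta> z" by (simp add: Q_def P_def \<beta>_def)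
      then have "ip (U u (Q x) - Iv x u) Ldz - ip (U u (Q x) - Iv x u) (Q Ldz) = cnj \<beta> * g u"
        by (metis g_def ip_diff_right ip_sc_right)
      then show "ip (U u (Q x)) Ldz - ip z z * f x u - integral {0..u} (\<lambda>\<sigma>. f x (u - \<sigma>) * k' \<sigma>) = cnj \<beta> * g u"
        using r1 r2 by (simp add: algebra_simps)
    qed
    also have "\<dots> = cnj \<beta> * integral {0..t} g" by (rule integral_cmult[OF i_g])
    finally show ?thesis .
  qed
  have "g t = 0"
  proof (rule volterra_zero[OF gc _ _ t, where k="\<lambda>_. - cnj \<beta>"])
    show "continuous_on {0..} (\<lambda>_. - cnj \<beta>)" by (rule continuous_on_const)
    fix t :: real assume t: "t \<ge> 0"
    have i: "(\<lambda>s. g (t - s)) integrable_on {0..t}"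
      by (intro integrable_continuous_real cont_refl gc) auto
    have e1: "integral {0..t} (\<lambda>s. g (t - s) * - cnj \<beta>) = - (integral {0..t} (\<lambda>s. g (t - s)) * cnj \<beta>)"
      using integral_multc[OF i, of "- cnj \<beta>"] by simp
    have e2: "integral {0..t} (\<lambda>s. g (t - s)) = integral {0..t} g" by (rule conv_reflect)
    show "g t = - integral {0..t} (\<lambda>s. g (t - s) * - cnj \<beta>)"
      unfolding e1 e2 key[OF t] by (simp add: mult.commute)
  qed
  then show ?thesis by (simp add: g_def)
qed

end

context main begin

lemma P_zero_of_orth: "ip v z = 0 \<Longrightarrow> P v = 0"
  by (simp add: P_def)

lemma G_split: "G s x = P x + (U s (Q x) - Iv x s)"
  by (simp add: G_def)

lemma P_G: "s \<ge> 0 \<Longrightarrow> P (G s x) = P x"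
  unfolding G_split P_add using invariance[of s x] by (simp add: P_P P_zero_of_orth)

lemma Q_G: "s \<ge> 0 \<Longrightarrow> Q (G s x) = U s (Q x) - Iv x s"
  using P_G[of s x] by (simp add: Q_def G_split)

lemma U_Iv: assumes "\<tau> \<ge> 0" "s \<ge> 0"
  shows "U \<tau> (Iv x s) = integral {0..s} (\<lambda>\<sigma>. sc (f x (s - \<sigma>)) (U (\<tau> + \<sigma>) z))"
proof -
  have "U \<tau> (Iv x s) = integral {0..s} (\<lambda>\<sigma>. U \<tau> (sc (f x (s - \<sigma>)) (U \<sigma> z)))"
    unfolding Iv_def using integral_linear[OF cv_int U_bl[OF assms(1)]] by (simp add: o_def)
  also have "\<dots> = integral {0..s} (\<lambda>\<sigma>. sc (f x (s - \<sigma>)) (U (\<tau> + \<sigma>) z))"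
    by (rule integral_cong) (use assms in \<open>auto simp: U_sc U_add\<close>)
  finally show ?thesis .
qed

lemma cv_cont2: "\<tau> \<ge> 0 \<Longrightarrow> continuous_on {0..s} (\<lambda>\<sigma>. sc (f x (s - \<sigma>)) (U (\<tau> + \<sigma>) z))"
  by (intro continuous_on_sc cont_refl f_cont continuous_on_compose2[OF U_cont] continuous_intros) auto

lemma ip_UIv: assumes "\<tau> \<ge> 0" "s \<ge> 0"
  shows "ip (U \<tau> (Iv x s)) v = integral {0..s} (\<lambda>\<sigma>. f x (s - \<sigma>) * ip (U (\<tau> + \<sigma>) z) v)"
  unfolding U_Iv[OF assms]
  using integral_linear[OF integrable_continuous_real[OF cv_cont2[OF assms(1)]] ip_bl_left[of v]]
  by (simp add: o_def ip_sc_left)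

lemma f_shift: assumes s: "s \<ge> 0" and \<tau>: "\<tau> \<ge> 0" shows "f (G s x) \<tau> = f x (\<tau> + s)"
proof -
  let ?d = "\<lambda>\<tau>. f (G s x) \<tau> - f x (\<tau> + s)"
  have "?d \<tau> = 0"
  proof (rule volterra_zero[OF _ kk_cont _ \<tau>])
    show "continuous_on {0..} ?d"
      by (intro continuous_intros f_cont continuous_on_compose2[OF f_cont]) (use s in auto)
    fix \<tau> :: real assume \<tau>: "\<tau> \<ge> 0"
    let ?J = "integral {0..s} (\<lambda>\<sigma>. f x (s - \<sigma>) * kk (\<tau> + \<sigma>))"
    have J: "?J = integral {0..s} (\<lambda>\<sigma>. f x (s - \<sigma>) * ip (U (\<tau> + \<sigma>) z) (Q Ldz)) * inverse (ip z z)"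
    proof -
      have ic: "(\<lambda>\<sigma>. f x (s - \<sigma>) * ip (U (\<tau> + \<sigma>) z) (Q Ldz)) integrable_on {0..s}"
        by (intro integrable_continuous_real continuous_intros cont_refl f_cont
            continuous_on_compose2[OF U_cont]) (use \<tau> in auto)
      show ?thesis using integral_multc[OF ic, of "inverse (ip z z)"]
        by (simp add: kk_def divide_inverse mult.assoc)
    qed
    have aG: "aa (G s x) \<tau> = aa x (\<tau> + s) - ?J"
    proof -
      have "aa (G s x) \<tau> = ip (U \<tau> (U s (Q x)) - U \<tau> (Iv x s)) (Q Ldz) / ip z z"
        using s \<tau> by (simp add: aa_def Q_G U_diff)
      also have "\<dots> = (ip (U (\<tau> + s) (Q x)) (Q Ldz) - ip (U \<tau> (Iv x s)) (Q Ldz)) / ip z z"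
        using s \<tau> by (simp add: ip_diff_left U_add)
      also have "\<dots> = aa x (\<tau> + s) - ?J"
        unfolding J ip_UIv[OF \<tau> s] by (simp add: aa_def diff_divide_distrib divide_inverse left_diff_distrib)
      finally show ?thesis .
    qed
    have h_cont: "continuous_on {0..\<tau>+s} (\<lambda>\<sigma>. f x (\<tau> + s - \<sigma>) * kk \<sigma>)"
      by (intro continuous_intros cont_refl f_cont continuous_on_subset[OF kk_cont]) auto
    have spl: "integral {0..\<tau>+s} (\<lambda>\<sigma>. f x (\<tau> + s - \<sigma>) * kk \<sigma>) =
        integral {0..\<tau>} (\<lambda>\<sigma>. f x (\<tau> + s - \<sigma>) * kk \<sigma>) + ?J"
      using split_shift[OF h_cont \<tau> s] by simp
    have fx: "f x (\<tau> + s) = aa x (\<tau> + s) - integral {0..\<tau>} (\<lambda>\<sigma>. f x (\<tau> + s - \<sigma>) * kk \<sigma>) - ?J"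
      using f_eq'[of "\<tau> + s" x] s \<tau> spl by simp
    have i1: "(\<lambda>\<sigma>. f (G s x) (\<tau> - \<sigma>) * kk \<sigma>) integrable_on {0..\<tau>}" by (rule conv_int[OF f_cont kk_cont])
    have i2: "(\<lambda>\<sigma>. f x (\<tau> + s - \<sigma>) * kk \<sigma>) integrable_on {0..\<tau>}"
      by (intro integrable_continuous_real continuous_intros cont_refl f_cont continuous_on_subset[OF kk_cont]) (use s in auto)
    have "integral {0..\<tau>} (\<lambda>\<sigma>. ?d (\<tau> - \<sigma>) * kk \<sigma>) =
        integral {0..\<tau>} (\<lambda>\<sigma>. f (G s x) (\<tau> - \<sigma>) * kk \<sigma> - f x (\<tau> + s - \<sigma>) * kk \<sigma>)"
      by (rule integral_cong) (simp add: algebra_simps)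
    also have "\<dots> = integral {0..\<tau>} (\<lambda>\<sigma>. f (G s x) (\<tau> - \<sigma>) * kk \<sigma>) - integral {0..\<tau>} (\<lambda>\<sigma>. f x (\<tau> + s - \<sigma>) * kk \<sigma>)"
      by (rule integral_diff[OF i1 i2])
    finally have eqd: "integral {0..\<tau>} (\<lambda>\<sigma>. ?d (\<tau> - \<sigma>) * kk \<sigma>) =
        integral {0..\<tau>} (\<lambda>\<sigma>. f (G s x) (\<tau> - \<sigma>) * kk \<sigma>) - integral {0..\<tau>} (\<lambda>\<sigma>. f x (\<tau> + s - \<sigma>) * kk \<sigma>)" .
    show "?d \<tau> = - integral {0..\<tau>} (\<lambda>\<sigma>. ?d (\<tau> - \<sigma>) * kk \<sigma>)"
      unfolding eqd fx f_eq'[OF \<tau>, of "G s x"] aG by (simp add: algebra_simps)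
  qed
  then show ?thesis by simp
qed

lemma G_semi: assumes s: "s \<ge> 0" and t: "t \<ge> 0" shows "G (t + s) x = G t (G s x)"
proof -
  have I1: "Iv (G s x) t = integral {0..t} (\<lambda>\<sigma>. sc (f x (t + s - \<sigma>)) (U \<sigma> z))"
    unfolding Iv_def by (rule integral_cong) (use s t in \<open>auto simp: f_shift algebra_simps\<close>)
  have I2: "Iv x (t + s) = integral {0..t} (\<lambda>\<sigma>. sc (f x (t + s - \<sigma>)) (U \<sigma> z)) + U t (Iv x s)"
  proof -
    have c: "continuous_on {0..t+s} (\<lambda>\<sigma>. sc (f x (t + s - \<sigma>)) (U \<sigma> z))" by (rule cv_cont)
    show ?thesis unfolding Iv_def[of x "t + s"] split_shift[OF c t s] U_Iv[OF t s] by simp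
  qed
  have e1: "G (t + s) x = P x + U t (U s (Q x)) - (integral {0..t} (\<lambda>\<sigma>. sc (f x (t + s - \<sigma>)) (U \<sigma> z)) + U t (Iv x s))"
    unfolding G_def I2 using s t by (simp add: U_add)
  have e2: "G t (G s x) = P x + (U t (U s (Q x)) - U t (Iv x s)) - integral {0..t} (\<lambda>\<sigma>. sc (f x (t + s - \<sigma>)) (U \<sigma> z))"
    using s t by (simp add: G_def[of t] P_G Q_G U_diff I1)
  show ?thesis unfolding e1 e2 by (simp add: algebra_simps)
qed

lemma G_semigroup: "strongly_cont_semigroup sc G"
  unfolding strongly_cont_semigroup_def
proof (intro conjI allI impI)
  show "bounded_clin sc (G t)" if "t \<ge> 0" for t using G_clin that by blast
  show "G 0 = id" by (rule G0)
  fix s t :: real assume "0 \<le> s" "0 \<le> t"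
  then show "G (s + t) = G s \<circ> G t" by (simp add: fun_eq_iff G_semi)
next
  fix x show "((\<lambda>t. G t x) \<longlongrightarrow> x) (at_right 0)" by (rule G_right)
qed

end
theorem theorem3:
  fixes sc :: "complex \<Rightarrow> 'a::banach \<Rightarrow> 'a"
    and ip :: "'a \<Rightarrow> 'a \<Rightarrow> complex"
    and U :: "real \<Rightarrow> 'a \<Rightarrow> 'a"
    and z :: 'a
    and P Q :: "'a \<Rightarrow> 'a"
    and Ldz :: 'a
    and f :: "'a \<Rightarrow> real \<Rightarrow> complex"
  assumes hilb: "complex_hilbert sc ip"
    and semi: "strongly_cont_semigroup sc U"
    and zdom: "z \<in> adj_dom ip (gen_dom U) (gen U)"
    and znz: "z \<noteq> 0"
    and Ldz_def: "Ldz = adj ip (gen_dom U) (gen U) z"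
    and P_def: "\<And>x. P x = sc (ip x z / ip z z) z"
    and Q_def: "\<And>x. Q x = x - P x"
    and f_cont: "\<And>x. continuous_on {0..} (f x)"
    and f_eq: "\<And>x t. 0 \<le> t \<Longrightarrow>
       f x t = ip (U t (Q x)) (Q Ldz) / ip z z
             - integral {0..t} (\<lambda>s. f x (t - s) * (ip (U s z) (Q Ldz) / ip z z))"
  shows "strongly_cont_semigroup sc
           (\<lambda>t x. P x + U t (Q x) - integral {0..t} (\<lambda>s. sc (f x (t - s)) (U s z)))"
proof -
  interpret m: main sc ip U z Ldz P Q f
    using hilb semi zdom Ldz_def znz P_def Q_def f_cont f_eq by unfold_locales blast+
  have eq: "(\<lambda>t x. P x + U t (Q x) - integral {0..t} (\<lambda>s. sc (f x (t - s)) (U s z))) = m.G"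
    by (simp add: fun_eq_iff m.G_def m.Iv_def)
  show ?thesis unfolding eq by (rule m.G_semigroup)
qed

end
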